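(* Let $V$ be a real vector space of dimension $m\ge3$ with a positive definite inner product $\langle\cdot,\cdot\rangle$, and let $R$ be an algebraic curvature tensor on $V$ with Jacobi operator $J$. \begin{enumerate} \item If $J(x)J(y)=J(y)J(x)$ for all $x,y\in V$, then $R=0$. \item $R_0$ is Jacobi-Tsankov, and for every Hermitian almost complex structure $\Theta$ on $V$, $R_\Theta$ is Jacobi-Tsankov. \item If $R$ is Jacobi-Tsankov, then either $R=cR_0$ for some $c\in\mathbb{R}$, or $R=cR_\Theta$ for some $c\in\mathbb{R}$ and some Hermitian almost complex structure $\Theta$ on $V$. \end{enumerate}
   Context: An algebraic curvature tensor is $R\in\otimes^4V^*$ satisfying $R(x,y,z,w)=R(z,w,x,y)=-R(y,x,z,w)$ and $R(x,y,z,w)+R(y,z,x,w)+R(z,x,y,w)=0$. The curvature operator $\mathcal{R}(x,y)$ is the endomorphism of $V$ with $\langle\mathcal{R}(x,y)z,w\rangle=R(x,y,z,w)$; the Jacobi operator is $J(x):y\mapsto\mathcal{R}(y,x)x$. $R$ is called Jacobi-Tsankov if $x\perp y$ implies $J(x)J(y)=J(y)J(x)$. $R_0$ is the tensor with curvature operator $R_0(x,y)z=\langle y,z\rangle x-\langle x,z\rangle y$. A Hermitian almost complex structure is a linear $\Theta:V\to V$ with $\Theta^2=-\mathrm{id}$ and $\Theta^*=-\Theta$; for such $\Theta$, $R_\Theta$ is the tensor with curvature operator $R_\Theta(x,y)z=\langle\Theta y,z\rangle\Theta x-\langle\Theta x,z\rangle\Theta y-2\langle\Theta x,y\rangle\Theta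 z$. *)

theory Defs
  imports "HOL-Analysis.Analysis"
begin

text \<open>V is modelled by a Euclidean space type 'a (finite-dimensional real inner product
space); a 4-tensor is a function 'a => 'a => 'a => 'a => real that is linear in each slot.\<close>

definition alg_curv_tensor :: "('a::euclidean_space \<Rightarrow> 'a \<Rightarrow> 'a \<Rightarrow> 'a \<Rightarrow> real) \<Rightarrow> bool" where
  "alg_curv_tensor R \<longleftrightarrow>
     (\<forall>y z w. linear (\<lambda>x. R x y z w)) \<and>
     (\<forall>x z w. linear (\<lambda>y. R x y z w)) \<and>
     (\<forall>x y w. linear (\<lambda>z. R x y z w)) \<and>
     (\<forall>x y z. linear (\<lambda>w. R x y z w)) \<and>
     (\<forall>x y z w. R x y z w = R z w x y) \<and>
     (\<forall>x y z w. R x y z w = - R y x z w) \<and>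
     (\<forall>x y z w. R x y z w + R y z x w + R z x y w = 0)"

text \<open>Curvature operator: the unique vector with inner product R(x,y,z,w) against every w.\<close>
definition curv_op :: "('a::euclidean_space \<Rightarrow> 'a \<Rightarrow> 'a \<Rightarrow> 'a \<Rightarrow> real) \<Rightarrow> 'a \<Rightarrow> 'a \<Rightarrow> 'a \<Rightarrow> 'a" where
  "curv_op R x y z = (\<Sum>b\<in>Basis. R x y z b *\<^sub>R b)"

definition jacobi_op :: "('a::euclidean_space \<Rightarrow> 'a \<Rightarrow> 'a \<Rightarrow> 'a \<Rightarrow> real) \<Rightarrow> 'a \<Rightarrow> 'a \<Rightarrow> 'a" where
  "jacobi_op R x = (\<lambda>y. curv_op R y x x)"

definition jacobi_tsankov :: "('a::euclidean_space \<Rightarrow> 'a \<Rightarrow> 'a \<Rightarrow> 'a \<Rightarrow> real) \<Rightarrow> bool" where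
  "jacobi_tsankov R \<longleftrightarrow>
     (\<forall>x y. inner x y = 0 \<longrightarrow> jacobi_op R x \<circ> jacobi_op R y = jacobi_op R y \<circ> jacobi_op R x)"

definition hermitian_acs :: "('a::euclidean_space \<Rightarrow> 'a) \<Rightarrow> bool" where
  "hermitian_acs \<Theta> \<longleftrightarrow> linear \<Theta> \<and> (\<forall>x. \<Theta> (\<Theta> x) = - x) \<and>
     (\<forall>x y. inner (\<Theta> x) y = - inner x (\<Theta> y))"

definition R0 :: "'a::euclidean_space \<Rightarrow> 'a \<Rightarrow> 'a \<Rightarrow> 'a \<Rightarrow> real" where
  "R0 x y z w = inner (inner y z *\<^sub>R x - inner x z *\<^sub>R y) w"

definition RTheta :: "('a::euclidean_space \<Rightarrow> 'a) \<Rightarrow> 'a \<Rightarrow> 'a \<Rightarrow> 'a \<Rightarrow> 'a \<Rightarrow> real" where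
  "RTheta \<Theta> x y z w = inner (inner (\<Theta> y) z *\<^sub>R \<Theta> x - inner (\<Theta> x) z *\<^sub>R \<Theta> y
                               - (2 * inner (\<Theta> x) y) *\<^sub>R \<Theta> z) w"

end

theory Submission imports Defs begin

lemma vec_eqI: "(\<And>w. inner a w = inner b w) \<Longrightarrow> (a::'a::real_inner) = b"
  using vector_eq_rdot by blast


lemma quad_le_zero:
  fixes a C :: real
  assumes "\<And>t. 2 * t * a \<le> t * t * C"
  shows "a = 0"
proof -
  define d where "d = \<bar>C\<bar> + 1"
  have d: "d > 0" "C < d" unfolding d_def by auto
  have "2 * (a/d) * a \<le> (a/d) * (a/d) * C" using assms .
  hence "2 * (a*a) * d \<le> (a*a) * C" using d
    by (simp add: field_simps power2_eq_square)
  moreover have "(a*a) * C \<le> (a*a) * d" using d by (intro mult_left_mono) auto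
  ultimately have "(a*a) * d \<le> 0" by linarith
  hence "a * a \<le> 0" using d by (simp add: mult_le_0_iff)
  thus ?thesis by (metis mult_eq_0_iff not_square_less_zero order_le_less)
qed

lemma eig_max:
  fixes A :: "'a::euclidean_space \<Rightarrow> 'a"
  assumes lin: "linear A" and sym: "\<And>u w. inner (A u) w = inner u (A w)"
    and S: "subspace S" and inv: "\<And>u. u \<in> S \<Longrightarrow> A u \<in> S" and ne: "u0 \<in> S" "u0 \<noteq> 0"
  shows "\<exists>v\<in>S. norm v = 1 \<and> A v = inner (A v) v *\<^sub>R v \<and> (\<forall>u\<in>S. inner (A u) u \<le> inner (A v) v * inner u u)"
proof -
  define K where "K = S \<inter> sphere 0 1"
  have cK: "compact K" unfolding K_def
    by (intro closed_Int_compact closed_subspace S compact_sphere)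
  have "u0 /\<^sub>R norm u0 \<in> K" unfolding K_def using ne S
    by (simp add: subspace_scale)
  hence neK: "K \<noteq> {}" by blast
  have bl: "bounded_linear A" using lin by (simp add: linear_conv_bounded_linear)
  have cont: "continuous_on K (\<lambda>u. inner (A u) u)"
    by (intro continuous_intros linear_continuous_on bl)
  obtain v where vK: "v \<in> K" and vmax: "\<And>u. u \<in> K \<Longrightarrow> inner (A u) u \<le> inner (A v) v"
    using continuous_attains_sup[OF cK neK cont] by blast
  define M where "M = inner (A v) v"
  have vS: "v \<in> S" and nv: "norm v = 1" using vK unfolding K_def by auto
  have vv: "inner v v = 1" using nv by (simp add: dot_square_norm)
  have bound: "inner (A u) u \<le> M * inner u u" if uS: "u \<in> S" for u
  proof (cases "u = 0")
    case True thus ?thesis by (simp add: linear_0[OF lin])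
  next
    case False
    define u' where "u' = u /\<^sub>R norm u"
    have "u' \<in> K" unfolding K_def u'_def using uS False S by (simp add: subspace_scale)
    hence "inner (A u') u' \<le> M" using vmax M_def by blast
    moreover have "inner (A u') u' = inner (A u) u / (norm u)^2"
      unfolding u'_def using False by (simp add: linear_scale[OF lin] power2_eq_square field_simps)
    ultimately have "inner (A u) u / (norm u)^2 \<le> M" by simp
    moreover have "(norm u)^2 = inner u u" by (simp add: dot_square_norm)
    moreover have "(norm u)^2 > 0" using False by simp
    ultimately show ?thesis by (simp add: divide_le_eq mult.commute)
  qed
  have orth: "inner (A v) w = 0" if wS: "w \<in> S" and wv: "inner w v = 0" for w
  proof -
    define a where "a = inner (A v) w"
    define C where "C = M * inner w w - inner (A w) w"
    have "2 * t * a \<le> t * t * C" for t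
    proof -
      have "v + t *\<^sub>R w \<in> S" using vS wS S by (simp add: subspace_add subspace_scale)
      note b = bound[OF this]
      have e1: "inner (A (v + t *\<^sub>R w)) (v + t *\<^sub>R w) = M + 2 * t * a + t * t * inner (A w) w"
      proof -
        have "inner (A w) v = a" unfolding a_def by (metis sym inner_commute)
        thus ?thesis unfolding M_def a_def
          by (simp add: linear_add[OF lin] linear_scale[OF lin] inner_add_left inner_add_right algebra_simps)
      qed
      have wv': "inner v w = 0" using wv by (simp add: inner_commute)
      have e2: "inner (v + t *\<^sub>R w) (v + t *\<^sub>R w) = 1 + t * t * inner w w"
        using vv wv wv' by (simp add: inner_add_left inner_add_right algebra_simps)
      have "M + 2 * t * a + t * t * inner (A w) w \<le> M * (1 + t * t * inner w w)"
        using b unfolding e1 e2 .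
      thus ?thesis unfolding C_def by (simp add: algebra_simps)
    qed
    thus ?thesis using quad_le_zero a_def by blast
  qed
  define w where "w = A v - M *\<^sub>R v"
  have wS: "w \<in> S" unfolding w_def using vS inv S by (simp add: subspace_diff subspace_scale)
  have "inner w v = 0" unfolding w_def M_def using vv by (simp add: inner_diff_left)
  hence "inner (A v) w = 0" using orth wS by blast
  moreover have "inner w w = inner (A v) w - M * inner w v" unfolding w_def
    by (simp add: inner_diff_left inner_commute)
  ultimately have "inner w w = 0" using \<open>inner w v = 0\<close> by simp
  hence "w = 0" by simp
  hence "A v = M *\<^sub>R v" unfolding w_def by simp
  thus ?thesis using vS nv bound M_def by blast
qed

lemma eig_nonzero:
  fixes A :: "'a::euclidean_space \<Rightarrow> 'a"
  assumes lin: "linear A" and sym: "\<And>u w. inner (A u) w = inner u (A w)"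
    and S: "subspace S" and inv: "\<And>u. u \<in> S \<Longrightarrow> A u \<in> S" and ne: "u0 \<in> S" "A u0 \<noteq> 0"
  shows "\<exists>w\<in>S. w \<noteq> 0 \<and> (\<exists>\<mu>. \<mu> \<noteq> 0 \<and> A w = \<mu> *\<^sub>R w)"
proof -
  have u0: "u0 \<noteq> 0" using ne lin by (auto simp: linear_0)
  obtain v where vS: "v \<in> S" and nv: "norm v = 1" and ev: "A v = inner (A v) v *\<^sub>R v"
    and b1: "\<forall>u\<in>S. inner (A u) u \<le> inner (A v) v * inner u u"
    using eig_max[OF lin sym S inv ne(1) u0] by blast
  have linn: "linear (\<lambda>u. - A u)" using lin by (simp add: linear_compose_neg)
  have symn: "\<And>u w. inner (- A u) w = inner u (- A w)" using sym by simp
  have invn: "\<And>u. u \<in> S \<Longrightarrow> - A u \<in> S" using inv S by (simp add: subspace_neg)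
  obtain v' where vS': "v' \<in> S" and nv': "norm v' = 1" and ev': "- A v' = inner (- A v') v' *\<^sub>R v'"
    and b2: "\<forall>u\<in>S. inner (- A u) u \<le> inner (- A v') v' * inner u u"
    using eig_max[OF linn symn S invn ne(1) u0] by blast
  show ?thesis
  proof (cases "inner (A v) v = 0 \<and> inner (A v') v' = 0")
    case True
    have z: "inner (A u) u = 0" if "u \<in> S" for u
    proof -
      have "inner (A u) u \<le> 0" using b1 that True by auto
      moreover have "- inner (A u) u \<le> 0" using b2 that True by (simp add: inner_minus_left)
      ultimately show ?thesis by linarith
    qed
    have s: "u0 + A u0 \<in> S" using ne inv S by (simp add: subspace_add)
    have "inner (A (u0 + A u0)) (u0 + A u0) = inner (A u0) u0 + 2 * inner (A u0) (A u0) + inner (A (A u0)) (A u0)"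
      by (simp add: linear_add[OF lin] inner_add_left inner_add_right sym inner_commute)
    hence "inner (A u0) (A u0) = 0" using z[OF s] z[OF ne(1)] z[OF inv[OF ne(1)]] by simp
    thus ?thesis using ne by simp
  next
    case False
    hence "inner (A v) v \<noteq> 0 \<or> inner (A v') v' \<noteq> 0" by blast
    thus ?thesis
    proof
      assume "inner (A v) v \<noteq> 0"
      thus ?thesis using vS nv ev by (metis norm_zero zero_neq_one)
    next
      assume h: "inner (A v') v' \<noteq> 0"
      have "A v' = inner (A v') v' *\<^sub>R v'" using ev' by (simp add: inner_minus_left)
      thus ?thesis using vS' nv' h by (metis norm_zero zero_neq_one)
    qed
  qed
qed

lemma scale_solve: "(a::real) \<noteq> 0 \<Longrightarrow> a *\<^sub>R (y::'a::real_vector) = b *\<^sub>R x \<Longrightarrow> y = (b/a) *\<^sub>R x"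
proof -
  assume a: "a \<noteq> 0" and e: "a *\<^sub>R y = b *\<^sub>R x"
  have "y = (1/a) *\<^sub>R (a *\<^sub>R y)" using a by simp
  also have "\<dots> = (b/a) *\<^sub>R x" using e by simp
  finally show ?thesis .
qed

lemma scale_solve2: "(a::real) \<noteq> 0 \<Longrightarrow> a *\<^sub>R (y::'a::real_vector) = (a * b) *\<^sub>R x \<Longrightarrow> y = b *\<^sub>R x"
  using scale_solve[of a y "a*b" x] by simp

locale act =
  fixes R :: "'a::euclidean_space \<Rightarrow> 'a \<Rightarrow> 'a \<Rightarrow> 'a \<Rightarrow> real"
  assumes act: "alg_curv_tensor R"
begin

lemma lin1: "linear (\<lambda>x. R x y z w)" using act unfolding alg_curv_tensor_def by fast
lemma lin2: "linear (\<lambda>y. R x y z w)" using act unfolding alg_curv_tensor_def by fast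
lemma lin3: "linear (\<lambda>z. R x y z w)" using act unfolding alg_curv_tensor_def by fast
lemma lin4: "linear (\<lambda>w. R x y z w)" using act unfolding alg_curv_tensor_def by blast
lemma pair: "R x y z w = R z w x y" using act unfolding alg_curv_tensor_def by blast
lemma anti1: "R x y z w = - R y x z w" using act unfolding alg_curv_tensor_def by blast
lemma bianchi: "R x y z w + R y z x w + R z x y w = 0" using act unfolding alg_curv_tensor_def by blast
lemma anti2: "R x y z w = - R x y w z" by (metis anti1 pair)

lemma R_add1[simp]: "R (a+b) y z w = R a y z w + R b y z w" using linear_add[OF lin1] .
lemma R_add2[simp]: "R x (a+b) z w = R x a z w + R x b z w" using linear_add[OF lin2] .
lemma R_add3[simp]: "R x y (a+b) w = R x y a w + R x y b w" using linear_add[OF lin3] .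
lemma R_add4[simp]: "R x y z (a+b) = R x y z a + R x y z b" using linear_add[OF lin4] .
lemma R_diff1[simp]: "R (a-b) y z w = R a y z w - R b y z w" using linear_diff[OF lin1] .
lemma R_diff2[simp]: "R x (a-b) z w = R x a z w - R x b z w" using linear_diff[OF lin2] .
lemma R_diff3[simp]: "R x y (a-b) w = R x y a w - R x y b w" using linear_diff[OF lin3] .
lemma R_diff4[simp]: "R x y z (a-b) = R x y z a - R x y z b" using linear_diff[OF lin4] .
lemma R_scale1[simp]: "R (c *\<^sub>R a) y z w = c * R a y z w" using linear_scale[OF lin1] by simp
lemma R_scale2[simp]: "R x (c *\<^sub>R a) z w = c * R x a z w" using linear_scale[OF lin2] by simp
lemma R_scale3[simp]: "R x y (c *\<^sub>R a) w = c * R x y a w" using linear_scale[OF lin3] by simp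
lemma R_scale4[simp]: "R x y z (c *\<^sub>R a) = c * R x y z a" using linear_scale[OF lin4] by simp
lemma R_neg1[simp]: "R (-a) y z w = - R a y z w" using linear_neg[OF lin1] .
lemma R_neg2[simp]: "R x (-a) z w = - R x a z w" using linear_neg[OF lin2] .
lemma R_neg3[simp]: "R x y (-a) w = - R x y a w" using linear_neg[OF lin3] .
lemma R_neg4[simp]: "R x y z (-a) = - R x y z a" using linear_neg[OF lin4] .
lemma R_zero1[simp]: "R 0 y z w = 0" using linear_0[OF lin1] .
lemma R_zero2[simp]: "R x 0 z w = 0" using linear_0[OF lin2] .
lemma R_zero3[simp]: "R x y 0 w = 0" using linear_0[OF lin3] .
lemma R_zero4[simp]: "R x y z 0 = 0" using linear_0[OF lin4] .

lemma R_xx[simp]: "R x x z w = 0" using anti1[of x x z w] by simp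
lemma R_zz[simp]: "R x y z z = 0" using anti2[of x y z z] by simp

lemma inner_curv[simp]: "inner (curv_op R x y z) w = R x y z w"
proof -
  have "inner (curv_op R x y z) w = (\<Sum>b\<in>Basis. R x y z b * inner b w)"
    unfolding curv_op_def by (simp add: inner_sum_left)
  also have "\<dots> = R x y z (\<Sum>b\<in>Basis. (inner w b) *\<^sub>R b)"
    by (simp add: linear_sum[OF lin4] inner_commute mult.commute)
  also have "\<dots> = R x y z w" by (simp add: euclidean_representation)
  finally show ?thesis .
qed

definition J :: "'a \<Rightarrow> 'a \<Rightarrow> 'a" where "J x z = curv_op R z x x"
definition Jm :: "'a \<Rightarrow> 'a \<Rightarrow> 'a \<Rightarrow> 'a" where "Jm x y z = curv_op R z x y + curv_op R z y x"

lemma inner_J[simp]: "inner (J x z) w = R z x x w" unfolding J_def by simp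
lemma inner_Jm[simp]: "inner (Jm x y z) w = R z x y w + R z y x w" unfolding Jm_def by (simp add: inner_add_left)

lemma jacobi_J: "jacobi_op R = J" unfolding jacobi_op_def J_def by (rule ext) simp

lemma J_sym: "R z x x w = R w x x z"
  by (metis anti1 anti2 pair)
lemma inner_J_sym: "inner (J x z) w = inner z (J x w)"
  by (metis inner_J inner_commute J_sym)
lemma inner_J_sym': "inner w (J x z) = inner (J x w) z"
  by (metis inner_J inner_commute J_sym)
lemma R_swap: "R z x x w = R x z w x" by (metis pair anti1 anti2)

lemma J_add_z: "J x (a + b) = J x a + J x b" by (rule vec_eqI) (simp add: inner_add_left)
lemma J_diff_z: "J x (a - b) = J x a - J x b" by (rule vec_eqI) (simp add: inner_diff_left)
lemma J_scale_z: "J x (c *\<^sub>R a) = c *\<^sub>R J x a" by (rule vec_eqI) simp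
lemma J_zero_z: "J x 0 = 0" by (rule vec_eqI) simp
lemma J_linear: "linear (J x)"
  by (rule linearI) (simp_all add: J_add_z J_scale_z)
lemma J_xx: "J x x = 0" by (rule vec_eqI) simp
lemma J_scale_x: "J (c *\<^sub>R x) z = (c*c) *\<^sub>R J x z" by (rule vec_eqI) simp
lemma J_0: "J 0 z = 0" by (rule vec_eqI) simp
lemma J_plus: "J (x + y) z = J x z + Jm x y z + J y z"
  by (rule vec_eqI) (simp add: inner_add_left)
lemma J_minus: "J (x - y) z = J x z - Jm x y z + J y z"
  by (rule vec_eqI) (simp add: inner_add_left inner_diff_left)
lemma Jm_comm: "Jm x y z = Jm y x z" by (rule vec_eqI) simp
lemma Jm_aba: "Jm a b a = - J a b"
  by (rule vec_eqI) (simp add: anti1[of a b])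
lemma Jm_add1: "Jm (a + b) y z = Jm a y z + Jm b y z" by (rule vec_eqI) (simp add: inner_add_left)
lemma Jm_scale1: "Jm (c *\<^sub>R a) y z = c *\<^sub>R Jm a y z" by (rule vec_eqI) (simp add: algebra_simps)
lemma Jm_scale2: "Jm x (c *\<^sub>R a) z = c *\<^sub>R Jm x a z" by (rule vec_eqI) (simp add: algebra_simps)
lemma Jm_add_z: "Jm x y (a + b) = Jm x y a + Jm x y b" by (rule vec_eqI) (simp add: inner_add_left)
lemma Jm_scale_z: "Jm x y (c *\<^sub>R a) = c *\<^sub>R Jm x y a" by (rule vec_eqI) (simp add: algebra_simps)
lemma inner_J_x: "inner (J x z) x = 0" by simp
lemma inner_J_x'[simp]: "inner x (J x z) = 0" by (metis inner_commute inner_J_x)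
lemma inner_J_xx: "inner (J x z) z = inner (J z x) x" by (simp add: R_swap)

end

lemma act_eq:
  assumes A1: "alg_curv_tensor R1" and A2: "alg_curv_tensor R2"
    and h: "\<And>z y w. R1 z y y w = R2 z y y w"
  shows "R1 = R2"
proof -
  interpret a1: act R1 by (rule act.intro[OF A1])
  interpret a2: act R2 by (rule act.intro[OF A2])
  define D where "D = (\<lambda>x y z w. R1 x y z w - R2 x y z w)"
  have P: "D z y u w = - D z u y w" for z y u w
  proof -
    have "R1 z (y+u) (y+u) w = R2 z (y+u) (y+u) w" by (rule h)
    thus ?thesis unfolding D_def using h[of z y w] h[of z u w] by simp
  qed
  have A: "D x y z w = - D y x z w" for x y z w unfolding D_def using a1.anti1[of x y z w] a2.anti1[of x y z w] by simp
  have B: "D x y z w + D y z x w + D z x y w = 0" for x y z w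
    unfolding D_def using a1.bianchi[of x y z w] a2.bianchi[of x y z w] by simp
  have "D x y z w = 0" for x y z w
  proof -
    have "D y z x w = D x y z w" using P[of y z x w] A[of y x z w] by simp
    moreover have "D z x y w = D x y z w" using A[of z x y w] P[of x z y w] by simp
    ultimately show ?thesis using B[of x y z w] by simp
  qed
  thus ?thesis unfolding D_def by (intro ext) simp
qed

lemma R0_expand: "R0 x y z w = inner y z * inner x w - inner x z * inner y w"
  unfolding R0_def by (simp add: inner_diff_left)

lemma act_R0: "alg_curv_tensor (R0 :: 'a::euclidean_space \<Rightarrow> _)"
proof -
  have l1: "linear (\<lambda>x. R0 x y z w)" for y z w :: 'a
    by (rule linearI) (simp_all add: R0_expand inner_add_left algebra_simps)
  have l2: "linear (\<lambda>y. R0 x y z w)" for x z w :: 'a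
    by (rule linearI) (simp_all add: R0_expand inner_add_left algebra_simps)
  have l3: "linear (\<lambda>z. R0 x y z w)" for x y w :: 'a
    by (rule linearI) (simp_all add: R0_expand inner_add_right algebra_simps)
  have l4: "linear (\<lambda>w. R0 x y z w)" for x y z :: 'a
    by (rule linearI) (simp_all add: R0_expand inner_add_right algebra_simps)
  have s1: "R0 x y z w = R0 z w x y" for x y z w :: 'a
    by (simp add: R0_expand inner_commute algebra_simps)
  have s2: "R0 x y z w = - R0 y x z w" for x y z w :: 'a
    by (simp add: R0_expand)
  have s3: "R0 x y z w + R0 y z x w + R0 z x y w = 0" for x y z w :: 'a
    by (simp add: R0_expand inner_commute algebra_simps)
  show ?thesis unfolding alg_curv_tensor_def using l1 l2 l3 l4 s1 s2 s3 by blast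
qed

lemma act_scale:
  assumes A: "alg_curv_tensor R"
  shows "alg_curv_tensor (\<lambda>x y z w. c * R x y z w)"
proof -
  interpret act R by (rule act.intro[OF A])
  have l1: "linear (\<lambda>x. c * R x y z w)" for y z w by (rule linearI) (simp_all add: algebra_simps)
  have l2: "linear (\<lambda>y. c * R x y z w)" for x z w by (rule linearI) (simp_all add: algebra_simps)
  have l3: "linear (\<lambda>z. c * R x y z w)" for x y w by (rule linearI) (simp_all add: algebra_simps)
  have l4: "linear (\<lambda>w. c * R x y z w)" for x y z by (rule linearI) (simp_all add: algebra_simps)
  have s1: "c * R x y z w = c * R z w x y" for x y z w using pair by simp
  have s2: "c * R x y z w = - (c * R y x z w)" for x y z w using anti1[of x y z w] by simp
  have s3: "c * R x y z w + c * R y z x w + c * R z x y w = 0" for x y z w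
  proof -
    have "c * (R x y z w + R y z x w + R z x y w) = 0" using bianchi[of x y z w] by simp
    thus ?thesis by (simp add: algebra_simps)
  qed
  show ?thesis unfolding alg_curv_tensor_def using l1 l2 l3 l4 s1 s2 s3 by blast
qed


locale jt = act +
  assumes jt: "jacobi_tsankov R"
begin

lemma JT: "inner x y = 0 \<Longrightarrow> J x (J y z) = J y (J x z)"
  using jt unfolding jacobi_tsankov_def jacobi_J by (metis comp_apply)

lemma J_lin_simps: "J x (a + b) = J x a + J x b" "J x (a - b) = J x a - J x b"
  "J x (c *\<^sub>R a) = c *\<^sub>R J x a" "J x 0 = 0" "J x (- a) = - J x a"
  using J_add_z J_diff_z J_scale_z J_zero_z linear_neg[OF J_linear] by auto

lemma T1:
  assumes "inner x y = 0" "inner x u = 0"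
  shows "J x (Jm y u z) = Jm y u (J x z)"
proof -
  have e: "Jm y u w = J (y+u) w - J y w - J u w" for w using J_plus[of y u w] by simp
  have xyu: "inner x (y+u) = 0" using assms by (simp add: inner_add_right)
  show ?thesis unfolding e J_lin_simps using JT[OF xyu] JT[OF assms(1)] JT[OF assms(2)] by simp
qed

lemma L1:
  assumes xv: "inner x v = 0" and xw: "inner x w = 0" and ev: "J x v = l *\<^sub>R v"
    and ew: "J x w = m *\<^sub>R w" and lm: "l \<noteq> m"
  shows "J v w = 0"
proof -
  have "J x (Jm v w v) = Jm v w (J x v)" by (rule T1[OF xv xw])
  also have "\<dots> = l *\<^sub>R Jm v w v" using ev Jm_scale_z by simp
  finally have "J x (J v w) = l *\<^sub>R J v w" using Jm_aba[of v w] J_lin_simps by simp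
  moreover have "J x (J v w) = m *\<^sub>R J v w" using JT[OF xv] ew J_lin_simps by simp
  ultimately have "l *\<^sub>R J v w = m *\<^sub>R J v w" by metis
  thus ?thesis using lm scaleR_cancel_right by metis
qed

lemma L2:
  assumes xv: "inner x v = 0" and ev: "J x v = l *\<^sub>R v" and l: "l \<noteq> 0"
  shows "inner x x *\<^sub>R J v x = (l * inner v v) *\<^sub>R x"
proof -
  have perp: "inner (J v x) y = 0" if xy: "inner x y = 0" for y
  proof -
    have "J x (Jm v y x) = Jm v y (J x x)" by (rule T1[OF xv xy])
    hence "J x (Jm v y x) = 0" by (simp add: J_xx Jm_def curv_op_def)
    hence "inner (J x (Jm v y x)) v = 0" by simp
    hence "inner (Jm v y x) (J x v) = 0" by (simp only: inner_J_sym)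
    hence "l * inner (Jm v y x) v = 0" using ev by simp
    hence "R x v y v = 0" using l by simp
    thus ?thesis by (simp add: anti2[of x v v y])
  qed
  show ?thesis
  proof (cases "x = 0")
    case True thus ?thesis by simp
  next
    case False
    define c where "c = inner (J v x) x / inner x x"
    define r where "r = J v x - c *\<^sub>R x"
    have xx: "inner x x \<noteq> 0" using False by simp
    have "inner x r = 0" unfolding r_def c_def using xx
      by (simp add: inner_diff_right inner_commute)
    hence "inner (J v x) r = 0" using perp by simp
    moreover have "inner r r = inner (J v x) r - c * inner x r" unfolding r_def
      by (simp add: inner_diff_left)
    ultimately have "inner r r = 0" using \<open>inner x r = 0\<close> by simp
    hence "J v x = c *\<^sub>R x" unfolding r_def by simp
    moreover have "inner (J v x) x = l * inner v v"
    proof -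
      have "inner (J v x) x = R x v v x" by simp
      also have "\<dots> = R v x x v" by (rule pair)
      also have "\<dots> = inner (J x v) v" by simp
      finally show ?thesis using ev by simp
    qed
    ultimately show ?thesis unfolding c_def using xx by simp
  qed
qed

lemma L2u:
  assumes "inner x x = 1" "inner x v = 0" "J x v = l *\<^sub>R v" "l \<noteq> 0"
  shows "J v x = (l * inner v v) *\<^sub>R x"
  using L2[OF assms(2-4)] assms(1) by simp

lemma subspace_eig: "subspace {z. J x z = l *\<^sub>R z}"
  unfolding subspace_def by (simp add: J_lin_simps scaleR_add_right)

lemma stepA:
  assumes nz: "J x z0 \<noteq> 0"
  shows "\<exists>l. l \<noteq> 0 \<and> (\<forall>z. J x (J x z) = l *\<^sub>R J x z)"
proof -
  have x0: "x \<noteq> 0" using nz by (auto simp: J_0)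
  obtain v l where v: "v \<noteq> 0" and l: "l \<noteq> 0" and ev: "J x v = l *\<^sub>R v"
    using eig_nonzero[OF J_linear inner_J_sym subspace_UNIV _ _ nz] by blast
  define E where "E = {z. J x z = l *\<^sub>R z}"
  define S where "S = {z. \<forall>e\<in>E. inner z e = 0}"
  have subE: "subspace E" unfolding E_def by (rule subspace_eig)
  have subS: "subspace S" unfolding S_def subspace_def by (simp add: inner_add_left)
  have invS: "J x u \<in> S" if "u \<in> S" for u
  proof -
    have "inner (J x u) e = 0" if "e \<in> E" for e
    proof -
      have "inner (J x u) e = inner u (J x e)" by (rule inner_J_sym)
      thus ?thesis using that \<open>u \<in> S\<close> unfolding S_def E_def by simp
    qed
    thus ?thesis unfolding S_def by blast
  qed
  have perp_x: "inner w x = 0" if "J x w = m *\<^sub>R w" "m \<noteq> 0" for w m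
  proof -
    have "inner (J x w) x = 0" by simp
    thus ?thesis using that by simp
  qed
  have kill: "J x s = 0" if sS: "s \<in> S" for s
  proof (rule ccontr)
    assume "J x s \<noteq> 0"
    then obtain w m where wS: "w \<in> S" and w0: "w \<noteq> 0" and m: "m \<noteq> 0" and ew: "J x w = m *\<^sub>R w"
      using eig_nonzero[OF J_linear inner_J_sym subS invS sS] by blast
    have "l \<noteq> m"
    proof
      assume "l = m"
      hence "w \<in> E" using ew unfolding E_def by simp
      hence "inner w w = 0" using wS unfolding S_def by blast
      thus False using w0 by simp
    qed
    have xv: "inner x v = 0" using perp_x[OF ev l] by (simp add: inner_commute)
    have xw: "inner x w = 0" using perp_x[OF ew m] by (simp add: inner_commute)
    have vw: "inner v w = 0" using wS ev unfolding S_def E_def by (simp add: inner_commute)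
    have Jvw: "J v w = 0" by (rule L1[OF xv xw ev ew \<open>l \<noteq> m\<close>])
    define c where "c = l * inner v v / inner x x"
    have c0: "c \<noteq> 0" unfolding c_def using l v x0 by simp
    have Jvx: "J v x = c *\<^sub>R x" using L2[OF xv ev l] x0 unfolding c_def
      by (intro scale_solve) auto
    have vx: "inner v x = 0" using xv by (simp add: inner_commute)
    have "J x w = 0" by (rule L1[OF vx vw Jvx, of 0]) (use Jvw c0 in auto)
    thus False using ew m w0 by simp
  qed
  have spanE: "span E = E" using subE by (simp add: span_eq_iff)
  show ?thesis
  proof (intro exI[of _ l] conjI allI)
    show "l \<noteq> 0" by (rule l)
    fix z
    obtain y z' where y: "y \<in> span E" and z': "\<And>w. w \<in> span E \<Longrightarrow> orthogonal z' w" and zz: "z = y + z'"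
      using orthogonal_subspace_decomp_exists[of E z] by blast
    have "z' \<in> S" using z' spanE unfolding S_def orthogonal_def by auto
    hence "J x z' = 0" by (rule kill)
    moreover have "J x y = l *\<^sub>R y" using y spanE unfolding E_def by auto
    ultimately have "J x z = l *\<^sub>R y" using zz J_lin_simps by simp
    thus "J x (J x z) = l *\<^sub>R J x z" using \<open>J x y = l *\<^sub>R y\<close> J_lin_simps by simp
  qed
qed

lemma PP:
  assumes xv: "inner x v = 0" and xe: "inner x e = 0" and ve: "inner v e = 0"
    and ev: "J x v = l *\<^sub>R v" and ee: "J x e = l *\<^sub>R e" and l: "l \<noteq> 0" and v0: "v \<noteq> 0" and x0: "x \<noteq> 0"
  shows "inner x x *\<^sub>R J v e = (l * inner v v) *\<^sub>R e"
proof -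
  define c where "c = l * inner v v / inner x x"
  have xx: "inner x x \<noteq> 0" using x0 by simp
  have c0: "c \<noteq> 0" unfolding c_def using l v0 x0 by simp
  have Jvx: "J v x = c *\<^sub>R x" using L2[OF xv ev l] xx unfolding c_def
    by (intro scale_solve) auto
  obtain k where k: "\<And>z. J v (J v z) = k *\<^sub>R J v z"
    using stepA[of v x] Jvx c0 x0 by auto
  have "k = c"
  proof -
    have "J v (J v x) = (c * c) *\<^sub>R x" using Jvx J_lin_simps by simp
    moreover have "J v (J v x) = (k * c) *\<^sub>R x" using k[of x] Jvx by simp
    ultimately have "(c*c) *\<^sub>R x = (k*c) *\<^sub>R x" by metis
    hence "c * c = k * c" using x0 scaleR_cancel_right by metis
    hence "(c - k) * c = 0" by (simp add: algebra_simps)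
    thus ?thesis using c0 by simp
  qed
  define b where "b = e - (1/c) *\<^sub>R J v e"
  have Jvb: "J v b = 0" unfolding b_def using k[of e] \<open>k = c\<close> c0 J_lin_simps by simp
  have vb: "inner v b = 0" unfolding b_def using ve by (simp add: inner_diff_right inner_commute)
  have vx: "inner v x = 0" using xv by (simp add: inner_commute)
  have "J x b = 0" by (rule L1[OF vx vb Jvx, of 0]) (use Jvb c0 in auto)
  moreover have "J x b = l *\<^sub>R b"
  proof -
    have "J x (J v e) = J v (J x e)" by (rule JT[OF xv])
    hence "J x (J v e) = l *\<^sub>R J v e" using ee J_lin_simps by simp
    thus ?thesis unfolding b_def using ee J_lin_simps by (simp add: scaleR_diff_right)
  qed
  ultimately have "b = 0" using l by simp
  hence "e = (1/c) *\<^sub>R J v e" unfolding b_def by simp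
  hence "c *\<^sub>R e = c *\<^sub>R ((1/c) *\<^sub>R J v e)" by simp
  hence "J v e = c *\<^sub>R e" using c0 by simp
  thus ?thesis unfolding c_def using xx by simp
qed


lemma eig_perp: "J x w = m *\<^sub>R w \<Longrightarrow> m \<noteq> 0 \<Longrightarrow> inner x w = 0"
proof -
  assume a: "J x w = m *\<^sub>R w" "m \<noteq> 0"
  have "inner (J x w) x = 0" by simp
  thus ?thesis using a by (simp add: inner_commute)
qed

lemma inner_J_eig: "J x e = l *\<^sub>R e \<Longrightarrow> inner (J x u) e = l * inner u e"
proof -
  assume a: "J x e = l *\<^sub>R e"
  have "inner (J x u) e = inner u (J x e)" by (rule inner_J_sym)
  thus ?thesis using a by simp
qed

lemma sq_from_eig:
  assumes l: "l \<noteq> 0" and e1: "J x v1 = l *\<^sub>R v1" and v1: "v1 \<noteq> 0"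
  shows "J x (J x z) = l *\<^sub>R J x z"
proof -
  have "J x v1 \<noteq> 0" using e1 l v1 by simp
  then obtain k where k: "\<And>z. J x (J x z) = k *\<^sub>R J x z" using stepA by blast
  have "(l * l) *\<^sub>R v1 = (k * l) *\<^sub>R v1" using k[of v1] e1 J_lin_simps by simp
  hence "l * l = k * l" using v1 scaleR_cancel_right by metis
  hence "k = l" using l by simp
  thus ?thesis using k by simp
qed

lemma caseI:
  assumes l: "l \<noteq> 0" and e1: "J x v1 = l *\<^sub>R v1" and e2: "J x v2 = l *\<^sub>R v2"
    and v1: "v1 \<noteq> 0" and v2: "v2 \<noteq> 0" and v12: "inner v1 v2 = 0"
  shows "J x z = l *\<^sub>R (z - (inner z x / inner x x) *\<^sub>R x)"
proof -
  have x0: "x \<noteq> 0" using e1 v1 l by (auto simp: J_0)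
  have xx: "inner x x \<noteq> 0" using x0 by simp
  note sq = sq_from_eig[OF l e1 v1]
  define E where "E = {z. J x z = l *\<^sub>R z}"
  have subE: "subspace E" unfolding E_def by (rule subspace_eig)
  have Eperp: "inner x e = 0" if "e \<in> E" for e
  proof (cases "e = 0")
    case True thus ?thesis by simp
  next
    case False thus ?thesis using eig_perp[of x e l] that l unfolding E_def by simp
  qed
  define c where "c = (\<lambda>v::'a. l * inner v v / inner x x)"
  have L2x: "J v x = c v *\<^sub>R x" if "v \<in> E" for v
    using L2[of x v l] that Eperp[OF that] l xx unfolding E_def c_def
    by (intro scale_solve) auto
  have c0: "c v \<noteq> 0" if "v \<noteq> 0" for v using that l xx unfolding c_def by simp
  define k where "k = z - (1/l) *\<^sub>R J x z - (inner z x / inner x x) *\<^sub>R x"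
  have Jxk: "J x k = 0" unfolding k_def using sq J_lin_simps l J_xx by simp
  have xk: "inner x k = 0" unfolding k_def using xx
    by (simp add: inner_diff_right inner_commute)
  have "k = 0"
  proof (rule ccontr)
    assume f0: "k \<noteq> 0"
    define f where "f = k"
    have xf: "inner x f = 0" and Jxf: "J x f = 0" using xk Jxk f_def by auto
    have fE: "inner f v = 0" if "v \<in> E" for v
    proof -
      have "inner (J x f) v = l * inner f v" using inner_J_eig[of x v l f] that unfolding E_def by simp
      thus ?thesis using Jxf l by simp
    qed
    have Jf0: "J x f = 0 *\<^sub>R f" using Jxf by simp
    have L1x0: "J v f = 0" if "v \<in> E" for v
      using L1[of x v f l 0] that Eperp[OF that] xf Jf0 l unfolding E_def by simp
    have v1E: "v1 \<in> E" using e1 unfolding E_def by simp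
    have v2E: "v2 \<in> E" using e2 unfolding E_def by simp
    have Jfx: "J f x = 0"
    proof -
      define z' where "z' = J f x"
      have xf': "inner x f = 0" by (rule xf)
      have Jxz: "J x z' = 0" unfolding z'_def using JT[OF xf', of x] J_xx J_lin_simps by simp
      have xz: "inner x z' = 0"
      proof -
        have "inner z' x = R x f f x" unfolding z'_def by simp
        also have "\<dots> = R f x x f" by (rule pair)
        also have "\<dots> = inner (J x f) f" by simp
        finally show ?thesis using Jxf by (simp add: inner_commute)
      qed
      have v1f: "inner v1 f = 0" using fE[OF v1E] by (simp add: inner_commute)
      have "J v1 z' = J f (J v1 x)" unfolding z'_def by (rule JT[OF v1f])
      also have "\<dots> = c v1 *\<^sub>R z'" unfolding z'_def using L2x[OF v1E] J_lin_simps by simp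
      finally have a: "J v1 z' = c v1 *\<^sub>R z'" .
      have "J v1 z' = 0" using L1[of x v1 z' l 0] Eperp[OF v1E] xz e1 Jxz l by simp
      thus ?thesis using a c0[OF v1] unfolding z'_def by simp
    qed
    define y where "y = x + f"
    have Jyx: "J y x = 0" unfolding y_def J_plus using Jm_aba[of x f] Jxf Jfx J_xx
      by (simp add: Jm_comm[of f x])
    have yE: "inner y v = 0" if "v \<in> E" for v
      unfolding y_def using Eperp[OF that] fE[OF that] by (simp add: inner_add_left)
    have invE: "J y e \<in> E" if eE: "e \<in> E" for e
    proof -
      obtain v where vE: "v \<in> E" and v0: "v \<noteq> 0" and ve: "inner v e = 0"
      proof (cases "inner e v2 *\<^sub>R v1 - inner e v1 *\<^sub>R v2 = 0")
        case True
        have "inner (inner e v2 *\<^sub>R v1 - inner e v1 *\<^sub>R v2) v2 = 0" using True by simp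
        hence "inner e v1 * inner v2 v2 = 0" using v12 by (simp add: inner_diff_left)
        hence "inner v1 e = 0" using v2 by (simp add: inner_commute)
        thus ?thesis using that v1E v1 by blast
      next
        case False
        have "inner e v2 *\<^sub>R v1 - inner e v1 *\<^sub>R v2 \<in> E"
          using v1E v2E subE by (simp add: subspace_diff subspace_scale)
        moreover have "inner (inner e v2 *\<^sub>R v1 - inner e v1 *\<^sub>R v2) e = 0"
          by (simp add: inner_diff_left inner_commute[of v1 e] inner_commute[of v2 e])
        ultimately show ?thesis using that False by blast
      qed
      have xv: "inner x v = 0" using Eperp[OF vE] .
      have xe: "inner x e = 0" using Eperp[OF eE] .
      have Jxv: "J x v = l *\<^sub>R v" using vE unfolding E_def by simp
      have Jxe: "J x e = l *\<^sub>R e" using eE unfolding E_def by simp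
      have Jve: "J v e = c v *\<^sub>R e" using PP[OF xv xe ve Jxv Jxe l v0 x0] xx unfolding c_def
        by (intro scale_solve) auto
      define w where "w = J y e"
      have vy: "inner v y = 0" using yE[OF vE] by (simp add: inner_commute)
      have Jvw: "J v w = c v *\<^sub>R w" unfolding w_def using JT[OF vy, of e] Jve J_lin_simps by simp
      have wx: "inner w x = 0"
      proof -
        have "inner w x = inner e (J y x)" unfolding w_def by (rule inner_J_sym)
        thus ?thesis using Jyx by simp
      qed
      define k' where "k' = w - (1/l) *\<^sub>R J x w"
      have Jxk': "J x k' = 0" unfolding k'_def using sq J_lin_simps l by simp
      have xk': "inner x k' = 0" unfolding k'_def using wx by (simp add: inner_diff_right inner_commute)
      have vx: "inner v x = 0" using xv by (simp add: inner_commute)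
      have "J v k' = c v *\<^sub>R k'"
      proof -
        have "J v (J x w) = J x (J v w)" by (rule JT[OF vx])
        hence "J v (J x w) = c v *\<^sub>R J x w" using Jvw J_lin_simps by simp
        thus ?thesis unfolding k'_def using Jvw J_lin_simps by (simp add: scaleR_diff_right)
      qed
      moreover have "J v k' = 0" using L1[of x v k' l 0] xv xk' Jxv Jxk' l by simp
      ultimately have "k' = 0" using c0[OF v0] by simp
      hence "(1/l) *\<^sub>R J x w = w" unfolding k'_def by simp
      hence "l *\<^sub>R ((1/l) *\<^sub>R J x w) = l *\<^sub>R w" by simp
      hence "J x w = l *\<^sub>R w" using l by simp
      thus ?thesis unfolding E_def w_def by simp
    qed
    have JyS: "\<And>u. u \<in> E \<Longrightarrow> J y u \<in> E" using invE by blast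
    have "J y v1 \<noteq> 0"
    proof -
      have "inner (J y v1) v1 = R v1 y y v1" by simp
      also have "\<dots> = R y v1 v1 y" by (rule pair)
      also have "\<dots> = inner (J v1 y) y" by simp
      also have "J v1 y = c v1 *\<^sub>R x" unfolding y_def using L2x[OF v1E] L1x0[OF v1E] J_lin_simps by simp
      also have "inner (c v1 *\<^sub>R x) y = c v1 * inner x x" unfolding y_def using xf
        by (simp add: inner_add_right)
      finally have "inner (J y v1) v1 \<noteq> 0" using c0[OF v1] xx by simp
      thus ?thesis by (metis inner_zero_left)
    qed
    then obtain e m where eE: "e \<in> E" and e0: "e \<noteq> 0" and m: "m \<noteq> 0" and Jye: "J y e = m *\<^sub>R e"
      using eig_nonzero[OF J_linear inner_J_sym subE JyS v1E] by blast
    have ye: "inner y e = 0" using yE[OF eE] .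
    have "inner y y *\<^sub>R J e y = (m * inner e e) *\<^sub>R y" by (rule L2[OF ye Jye m])
    moreover have "J e y = c e *\<^sub>R x" unfolding y_def using L2x[OF eE] L1x0[OF eE] J_lin_simps by simp
    ultimately have A: "(inner y y * c e) *\<^sub>R x = (m * inner e e) *\<^sub>R y" by simp
    have B: "inner ((m * inner e e) *\<^sub>R y) f = m * inner e e * inner f f"
      unfolding y_def using xf by (simp add: inner_add_left inner_commute[of f x])
    have C: "inner ((inner y y * c e) *\<^sub>R x) f = 0" using xf by simp
    have "0 = m * inner e e * inner f f" using arg_cong[OF A, of "\<lambda>u. inner u f"] B C by metis
    thus False using m e0 f0 f_def by simp
  qed
  hence "(1/l) *\<^sub>R J x z = z - (inner z x / inner x x) *\<^sub>R x" unfolding k_def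
    by (simp add: algebra_simps)
  hence "l *\<^sub>R ((1/l) *\<^sub>R J x z) = l *\<^sub>R (z - (inner z x / inner x x) *\<^sub>R x)" by simp
  thus ?thesis using l by simp
qed


definition Sph :: "'a \<Rightarrow> real \<Rightarrow> bool" where
  "Sph x k \<longleftrightarrow> (\<forall>z. J x z = k *\<^sub>R (inner x x *\<^sub>R z - inner z x *\<^sub>R x))"

lemma caseI_Sph:
  assumes "l \<noteq> 0" "J x v1 = l *\<^sub>R v1" "J x v2 = l *\<^sub>R v2" "v1 \<noteq> 0" "v2 \<noteq> 0" "inner v1 v2 = 0"
  shows "Sph x (l / inner x x)" "x \<noteq> 0"
proof -
  show x0: "x \<noteq> 0" using assms by (auto simp: J_0)
  hence xx: "inner x x \<noteq> 0" by simp
  show "Sph x (l / inner x x)" unfolding Sph_def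
  proof
    fix z
    have "J x z = l *\<^sub>R (z - (inner z x / inner x x) *\<^sub>R x)" by (rule caseI[OF assms])
    also have "\<dots> = (l / inner x x) *\<^sub>R (inner x x *\<^sub>R z - inner z x *\<^sub>R x)"
      using xx by (simp add: scaleR_diff_right)
    finally show "J x z = (l / inner x x) *\<^sub>R (inner x x *\<^sub>R z - inner z x *\<^sub>R x)" .
  qed
qed

lemma glob0:
  assumes S: "Sph x k" and k: "k \<noteq> 0" and x0: "x \<noteq> 0" and xy: "inner x y = 0"
  shows "Sph y k"
proof (cases "y = 0")
  case True thus ?thesis unfolding Sph_def by (simp add: J_0)
next
  case False
  have xx: "inner x x \<noteq> 0" using x0 by simp
  have yy: "inner y y \<noteq> 0" using False by simp
  define l where "l = k * inner x x"
  have l0: "l \<noteq> 0" unfolding l_def using k xx by simp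
  have Jx: "J x w = l *\<^sub>R w" if "inner w x = 0" for w
    using S that unfolding Sph_def l_def by simp
  have yx: "inner y x = 0" using xy by (simp add: inner_commute)
  have Jxy: "J x y = l *\<^sub>R y" using Jx[OF yx] .
  have "inner x x *\<^sub>R J y x = (inner x x * (k * inner y y)) *\<^sub>R x"
    using L2[OF xy Jxy l0] unfolding l_def by (simp add: algebra_simps)
  hence Jyx: "J y x = (k * inner y y) *\<^sub>R x" using xx by (rule scale_solve2[rotated])
  show ?thesis unfolding Sph_def
  proof
    fix z
    define a where "a = inner z x / inner x x"
    define b where "b = inner z y / inner y y"
    define w where "w = z - a *\<^sub>R x - b *\<^sub>R y"
    have wx: "inner w x = 0" unfolding w_def a_def b_def using xx yx
      by (simp add: inner_diff_left)
    have wy: "inner w y = 0" unfolding w_def a_def b_def using yy xy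
      by (simp add: inner_diff_left)
    have xw: "inner x w = 0" and yw: "inner y w = 0" using wx wy by (simp_all add: inner_commute)
    have "inner x x *\<^sub>R J y w = (inner x x * (k * inner y y)) *\<^sub>R w"
      using PP[OF xy xw yw Jxy Jx[OF wx] l0 False x0] unfolding l_def by (simp add: algebra_simps)
    hence Jyw: "J y w = (k * inner y y) *\<^sub>R w" using xx by (rule scale_solve2[rotated])
    have zz: "z = a *\<^sub>R x + b *\<^sub>R y + w" unfolding w_def by simp
    have "J y z = a *\<^sub>R J y x + b *\<^sub>R J y y + J y w" unfolding zz J_lin_simps by simp
    also have "\<dots> = (k * inner y y) *\<^sub>R (a *\<^sub>R x + w)" using Jyx Jyw J_xx by (simp add: scaleR_add_right)
    also have "a *\<^sub>R x + w = z - b *\<^sub>R y" unfolding w_def by simp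
    also have "(k * inner y y) *\<^sub>R (z - b *\<^sub>R y) = k *\<^sub>R (inner y y *\<^sub>R z - inner z y *\<^sub>R y)"
      unfolding b_def using yy by (simp add: scaleR_diff_right)
    finally show "J y z = k *\<^sub>R (inner y y *\<^sub>R z - inner z y *\<^sub>R y)" .
  qed
qed

lemma glob:
  assumes dim: "DIM('a) \<ge> 3" and S: "Sph x k" and k: "k \<noteq> 0" and x0: "x \<noteq> 0"
  shows "Sph y k"
proof -
  have "dim {x, y} \<le> card {x, y}" by (rule dim_le_card) (auto intro: span_base)
  also have "\<dots> \<le> 2" by (simp add: card_insert_if)
  finally have "dim {x, y} < DIM('a)" using dim by simp
  then obtain u where u0: "u \<noteq> 0" and uo: "\<And>w. w \<in> span {x, y} \<Longrightarrow> orthogonal u w"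
    using orthogonal_to_subspace_exists[of "{x,y}"] by blast
  have ux: "inner x u = 0" using uo[of x] by (simp add: span_base orthogonal_def inner_commute)
  have uy: "inner u y = 0" using uo[of y] by (simp add: span_base orthogonal_def)
  have "Sph u k" by (rule glob0[OF S k x0 ux])
  thus ?thesis by (rule glob0[OF _ k u0 uy])
qed


lemma R_is_R0:
  assumes dim: "DIM('a) \<ge> 3" and S: "Sph x k" and k: "k \<noteq> 0" and x0: "x \<noteq> 0"
  shows "R = (\<lambda>x y z w. k * R0 x y z w)"
proof (rule act_eq[OF act act_scale[OF act_R0]])
  fix z y w
  have "Sph y k" by (rule glob[OF dim S k x0])
  hence "J y z = k *\<^sub>R (inner y y *\<^sub>R z - inner z y *\<^sub>R y)" unfolding Sph_def by blast
  hence "R z y y w = inner (k *\<^sub>R (inner y y *\<^sub>R z - inner z y *\<^sub>R y)) w"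
    using inner_J[of y z w] by simp
  thus "R z y y w = k * R0 z y y w" unfolding R0_def by simp
qed


lemma RK1match:
  assumes J: "\<And>z. J y z = (m * inner z e) *\<^sub>R e" and ee: "inner e e = 1"
    and ea: "J y a = k *\<^sub>R a" and a0: "a \<noteq> 0" and k0: "k \<noteq> 0"
  shows "J y z = (k / inner a a * inner z a) *\<^sub>R a"
proof -
  define t where "t = inner a e"
  have A: "(m * t) *\<^sub>R e = k *\<^sub>R a" using J[of a] ea unfolding t_def by simp
  have aa: "inner a a \<noteq> 0" using a0 by simp
  have mt: "m * t \<noteq> 0" using A k0 a0 by auto
  have eq: "e = (k / (m * t)) *\<^sub>R a" by (rule scale_solve[OF mt A])
  have "inner ((m * t) *\<^sub>R e) a = inner (k *\<^sub>R a) a" using A by simp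
  hence mtt: "m * t * t = k * inner a a" unfolding t_def by (simp add: inner_commute)
  have "J y z = (m * inner z e) *\<^sub>R e" by (rule J)
  also have "\<dots> = (m * (k / (m * t)) * (k / (m * t)) * inner z a) *\<^sub>R a"
    unfolding eq by (simp add: algebra_simps)
  also have "m * (k / (m * t)) * (k / (m * t)) = k / inner a a"
    using mt aa mtt k0 by (simp add: field_simps power2_eq_square)
  finally show ?thesis .
qed

end




lemma (in act) part1:
  assumes h: "\<forall>x y. jacobi_op R x \<circ> jacobi_op R y = jacobi_op R y \<circ> jacobi_op R x"
  shows "R = (\<lambda>x y z w. 0)"
proof -
  have C: "J x (J y z) = J y (J x z)" for x y z using h unfolding jacobi_J by (metis comp_apply)
  have Z: "J x z = 0" for x z
  proof -
    have a: "J x (J y x) = 0" for y using C[of x y x] J_xx J_zero_z by simp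
    have "J x (J (x+z) x) = 0" by (rule a)
    hence "J x (J x z) = 0" unfolding J_plus using a[of z] Jm_aba[of x z] J_xx
      by (simp add: J_add_z J_diff_z J_zero_z linear_neg[OF J_linear])
    hence "inner (J x z) (J x z) = 0" using inner_J_sym[of x "J x z" z] by (simp add: inner_commute)
    thus ?thesis by (metis inner_eq_zero_iff)
  qed
  have "R = (\<lambda>x y z w. 0 * R x y z w)"
  proof (rule act_eq[OF act act_scale[OF act]])
    fix z y w show "R z y y w = 0 * R z y y w" using inner_J[of y z w] Z by simp
  qed
  thus ?thesis by simp
qed

lemma R0_jt: "jacobi_tsankov (R0 :: 'a::euclidean_space \<Rightarrow> _)"
proof -
  interpret act R0 by (rule act.intro[OF act_R0])
  have JR: "jacobi_op R0 x = (\<lambda>z. inner x x *\<^sub>R z - inner z x *\<^sub>R x)" for x :: 'a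
    unfolding jacobi_J by (rule ext, rule vec_eqI) (simp add: R0_def)
  show ?thesis unfolding jacobi_tsankov_def
  proof (intro allI impI)
    fix x y :: 'a assume xy: "inner x y = 0"
    have yx: "inner y x = 0" using xy by (simp add: inner_commute)
    have "(inner x x *\<^sub>R (inner y y *\<^sub>R z - inner z y *\<^sub>R y) - inner (inner y y *\<^sub>R z - inner z y *\<^sub>R y) x *\<^sub>R x) =
          (inner y y *\<^sub>R (inner x x *\<^sub>R z - inner z x *\<^sub>R x) - inner (inner x x *\<^sub>R z - inner z x *\<^sub>R x) y *\<^sub>R y)" for z
      using xy yx by (simp add: inner_diff_left scaleR_diff_right algebra_simps)
    thus "jacobi_op R0 x \<circ> jacobi_op R0 y = jacobi_op R0 y \<circ> jacobi_op R0 x"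
      unfolding JR by (intro ext) simp
  qed
qed

lemma herm_props:
  assumes "hermitian_acs T"
  shows "linear T" "\<And>x. T (T x) = - x" "\<And>x y. inner (T x) y = - inner x (T y)"
    "\<And>x y. inner (T x) y = - inner (T y) x" "\<And>x. inner (T x) x = 0"
proof -
  show lin: "linear T" and "\<And>x. T (T x) = - x" and sk: "\<And>x y. inner (T x) y = - inner x (T y)"
    using assms unfolding hermitian_acs_def by auto
  show sk2: "\<And>x y. inner (T x) y = - inner (T y) x" using sk by (metis inner_commute)
  show "inner (T x) x = 0" for x
  proof -
    have "inner (T x) x = - inner (T x) x" by (rule sk2)
    thus ?thesis by linarith
  qed
qed

lemma RTheta_expand: "RTheta T x y z w = inner (T y) z * inner (T x) w - inner (T x) z * inner (T y) w - 2 * inner (T x) y * inner (T z) w"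
  unfolding RTheta_def by (simp add: inner_diff_left)

lemma act_RTheta:
  assumes H: "hermitian_acs T"
  shows "alg_curv_tensor (RTheta T)"
proof -
  note hp = herm_props[OF H]
  note lin = hp(1) and sk = hp(4)
  have l1: "linear (\<lambda>x. RTheta T x y z w)" for y z w
    by (rule linearI) (simp_all add: RTheta_expand linear_add[OF lin] linear_scale[OF lin] inner_add_left algebra_simps)
  have l2: "linear (\<lambda>y. RTheta T x y z w)" for x z w
    by (rule linearI) (simp_all add: RTheta_expand linear_add[OF lin] linear_scale[OF lin] inner_add_left inner_add_right algebra_simps)
  have l3: "linear (\<lambda>z. RTheta T x y z w)" for x y w
    by (rule linearI) (simp_all add: RTheta_expand linear_add[OF lin] linear_scale[OF lin] inner_add_left inner_add_right algebra_simps)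
  have l4: "linear (\<lambda>w. RTheta T x y z w)" for x y z
    by (rule linearI) (simp_all add: RTheta_expand inner_add_right algebra_simps)
  have s1: "RTheta T x y z w = RTheta T z w x y" for x y z w
    using sk[of w x] sk[of z y] sk[of z x] sk[of w y] sk[of z w] unfolding RTheta_expand by algebra
  have s2: "RTheta T x y z w = - RTheta T y x z w" for x y z w
    using sk[of y x] unfolding RTheta_expand by algebra
  have s3: "RTheta T x y z w + RTheta T y z x w + RTheta T z x y w = 0" for x y z w
    using sk[of z x] sk[of y x] sk[of z y] unfolding RTheta_expand by algebra
  show ?thesis unfolding alg_curv_tensor_def using l1 l2 l3 l4 s1 s2 s3 by blast
qed

lemma RTheta_J:
  assumes H: "hermitian_acs T"
  shows "jacobi_op (RTheta T) x = (\<lambda>z. (3 * inner z (T x)) *\<^sub>R T x)"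
proof -
  interpret act "RTheta T" by (rule act.intro[OF act_RTheta[OF H]])
  note hp = herm_props[OF H]
  show ?thesis unfolding jacobi_J
  proof (rule ext, rule vec_eqI)
    fix z w
    have "inner (J x z) w = RTheta T z x x w" by simp
    also have "\<dots> = - 3 * inner (T z) x * inner (T x) w" by (simp add: RTheta_expand hp(5))
    also have "\<dots> = inner ((3 * inner z (T x)) *\<^sub>R T x) w" by (simp add: hp(3)[of z x])
    finally show "inner (J x z) w = inner ((3 * inner z (T x)) *\<^sub>R T x) w" .
  qed
qed


lemma RTheta_jt:
  assumes H: "hermitian_acs T"
  shows "jacobi_tsankov (RTheta T)"
  unfolding jacobi_tsankov_def
proof (intro allI impI)
  fix x y :: 'a assume xy: "inner x y = 0"
  note hp = herm_props[OF H]
  have "inner (T y) (T x) = 0" using hp(3)[of y "T x"] hp(2)[of x] xy by (simp add: inner_commute)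
  hence "inner (T x) (T y) = 0" by (simp add: inner_commute)
  show "jacobi_op (RTheta T) x \<circ> jacobi_op (RTheta T) y = jacobi_op (RTheta T) y \<circ> jacobi_op (RTheta T) x"
    unfolding RTheta_J[OF H] using \<open>inner (T y) (T x) = 0\<close> \<open>inner (T x) (T y) = 0\<close>
    by (intro ext) (simp add: linear_scale[OF hp(1)] inner_commute)
qed


locale c2 = jt +
  assumes noI: "\<not> (\<exists>x l v1 v2. l \<noteq> 0 \<and> J x v1 = l *\<^sub>R v1 \<and> J x v2 = l *\<^sub>R v2 \<and> v1 \<noteq> 0 \<and> v2 \<noteq> 0 \<and> inner v1 v2 = 0)"
begin

lemma RK1:
  assumes nz: "J y z0 \<noteq> 0"
  shows "\<exists>m e. m \<noteq> 0 \<and> inner e e = 1 \<and> (\<forall>z. J y z = (m * inner z e) *\<^sub>R e)"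
proof -
  obtain l where l: "l \<noteq> 0" and sq: "\<And>z. J y (J y z) = l *\<^sub>R J y z" using stepA[OF nz] by blast
  define e where "e = J y z0 /\<^sub>R norm (J y z0)"
  have ee: "inner e e = 1" unfolding e_def using nz
    by (simp add: inner_commute power2_norm_eq_inner[symmetric] power2_eq_square)
  have e0: "e \<noteq> 0" using ee by auto
  have Je: "J y e = l *\<^sub>R e" unfolding e_def using sq[of z0] J_lin_simps by simp
  have "J y z = (l * inner z e) *\<^sub>R e" for z
  proof -
    define u where "u = (1/l) *\<^sub>R J y z"
    have Ju: "J y u = l *\<^sub>R u" unfolding u_def using sq[of z] J_lin_simps l by simp
    define w where "w = u - inner u e *\<^sub>R e"
    have Jw: "J y w = l *\<^sub>R w" unfolding w_def using Ju Je J_lin_simps by (simp add: scaleR_diff_right)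
    have we: "inner w e = 0" unfolding w_def using ee by (simp add: inner_diff_left)
    have "w = 0"
    proof (rule ccontr)
      assume "w \<noteq> 0"
      hence "\<exists>x l v1 v2. l \<noteq> 0 \<and> J x v1 = l *\<^sub>R v1 \<and> J x v2 = l *\<^sub>R v2 \<and> v1 \<noteq> 0 \<and> v2 \<noteq> 0 \<and> inner v1 v2 = 0"
        using l Jw Je e0 we by blast
      thus False using noI by blast
    qed
    hence "u = inner u e *\<^sub>R e" unfolding w_def by simp
    moreover have "J y z = l *\<^sub>R u" unfolding u_def using l by simp
    ultimately have "J y z = l *\<^sub>R (inner u e *\<^sub>R e)" by metis
    also have "inner u e = (1/l) * inner (J y z) e" unfolding u_def by simp
    also have "inner (J y z) e = l * inner z e" by (rule inner_J_eig[OF Je])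
    finally show ?thesis using l by simp
  qed
  thus ?thesis using l ee by blast
qed

end


locale c2d = c2 +
  fixes x0 v0 :: 'a and l :: real
  assumes x0u: "inner x0 x0 = 1" and v0u: "inner v0 v0 = 1" and x0v0: "inner x0 v0 = 0"
    and l0: "l \<noteq> 0" and Jx0: "\<And>z. J x0 z = (l * inner z v0) *\<^sub>R v0"
begin

lemma v0x0: "inner v0 x0 = 0" using x0v0 by (simp add: inner_commute)
lemma x0nz: "x0 \<noteq> 0" using x0u by auto
lemma v0nz: "v0 \<noteq> 0" using v0u by auto

lemma Jx0v0: "J x0 v0 = l *\<^sub>R v0" using Jx0[of v0] v0u by simp

lemma C1: "J v0 z = (l * inner z x0) *\<^sub>R x0"
proof -
  have Jv0x0: "J v0 x0 = l *\<^sub>R x0" using L2u[OF x0u x0v0 Jx0v0 l0] v0u by simp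
  hence "J v0 x0 \<noteq> 0" using l0 x0nz by simp
  then obtain m e where m: "m \<noteq> 0" and ee: "inner e e = 1" and J: "\<forall>z. J v0 z = (m * inner z e) *\<^sub>R e"
    using RK1 by blast
  show ?thesis using RK1match[of v0 m e x0 l z] J ee Jv0x0 x0nz l0 x0u by simp
qed

lemma RX: "R u x0 x0 w = l * inner u v0 * inner v0 w"
  using inner_J[of x0 u w] Jx0[of u] by simp
lemma RV: "R u v0 v0 w = l * inner u x0 * inner x0 w"
  using inner_J[of v0 u w] C1[of u] by simp
lemma Rxvx: "R x0 v0 x0 w = - (l * inner v0 w)"
  using anti1[of x0 v0 x0 w] RX[of v0 w] v0u by simp
lemma Rvxv: "R v0 x0 v0 w = - (l * inner x0 w)"
  using anti1[of v0 x0 v0 w] RV[of x0 w] x0u by simp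

lemma C2: "J (a *\<^sub>R x0 + b *\<^sub>R v0) z = (l * inner z (a *\<^sub>R v0 - b *\<^sub>R x0)) *\<^sub>R (a *\<^sub>R v0 - b *\<^sub>R x0)"
proof (cases "a = 0 \<and> b = 0")
  case True thus ?thesis by (simp add: J_0)
next
  case False
  define p where "p = a *\<^sub>R x0 + b *\<^sub>R v0"
  define q where "q = a *\<^sub>R v0 - b *\<^sub>R x0"
  have qq: "inner q q = a*a + b*b" unfolding q_def using x0u v0u x0v0 v0x0
    by (simp add: inner_diff_left inner_diff_right)
  have ab: "a*a + b*b \<noteq> 0" using False by (simp add: add_nonneg_eq_0_iff)
  have q0: "q \<noteq> 0" using qq ab by auto
  have Jpq: "J p q = (l * (a*a + b*b)) *\<^sub>R q"
  proof (rule vec_eqI)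
    fix w
    show "inner (J p q) w = inner ((l * (a*a + b*b)) *\<^sub>R q) w"
      unfolding p_def q_def using x0u v0u x0v0 v0x0
      by (simp add: RX RV Rxvx Rvxv inner_diff_left inner_add_left algebra_simps)
  qed
  have k0: "l * (a*a + b*b) \<noteq> 0" using l0 ab by simp
  have "J p \<noteq> (\<lambda>_. 0)" using Jpq k0 q0 by (metis scaleR_eq_0_iff)
  then obtain z0 where "J p z0 \<noteq> 0" by auto
  then obtain m e where m: "m \<noteq> 0" and ee: "inner e e = 1" and J: "\<forall>z. J p z = (m * inner z e) *\<^sub>R e"
    using RK1 by blast
  have "J p z = (l * (a*a + b*b) / inner q q * inner z q) *\<^sub>R q"
    using RK1match[of p m e q "l * (a*a+b*b)" z] J ee Jpq q0 k0 by blast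
  moreover have "l * (a*a + b*b) / inner q q = l" using qq ab by simp
  ultimately have "J p z = (l * inner z q) *\<^sub>R q" by simp
  thus ?thesis unfolding p_def q_def .
qed

lemma Jq: "J (a *\<^sub>R v0 - b *\<^sub>R x0) z = (l * inner z (a *\<^sub>R x0 + b *\<^sub>R v0)) *\<^sub>R (a *\<^sub>R x0 + b *\<^sub>R v0)"
proof -
  have "a *\<^sub>R v0 - b *\<^sub>R x0 = (-b) *\<^sub>R x0 + a *\<^sub>R v0" by simp
  moreover have "a *\<^sub>R x0 - (-b) *\<^sub>R v0 = a *\<^sub>R x0 + b *\<^sub>R v0" by simp
  ultimately show ?thesis using C2[of "-b" a z] by (simp add: algebra_simps)
qed

lemma C3:
  assumes hx: "inner h x0 = 0" and hv: "inner h v0 = 0"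
  shows "J h x0 = 0" "J h v0 = 0"
proof -
  have vh: "inner v0 h = 0" and xh: "inner x0 h = 0" using hx hv by (simp_all add: inner_commute)
  define z where "z = J h x0"
  have "J v0 z = J h (J v0 x0)" unfolding z_def by (rule JT[OF vh])
  also have "\<dots> = l *\<^sub>R z" unfolding z_def using C1[of x0] x0u J_lin_simps by simp
  finally have "(l * inner z x0) *\<^sub>R x0 = l *\<^sub>R z" using C1[of z] by simp
  hence zz: "z = inner z x0 *\<^sub>R x0" using l0 by (metis scaleR_scaleR scaleR_cancel_left)
  have "inner z x0 = R x0 h h x0" unfolding z_def by simp
  also have "\<dots> = R h x0 x0 h" by (rule pair)
  also have "\<dots> = 0" using RX[of h h] hv by simp
  finally show "J h x0 = 0" using zz z_def by simp
next
  have vh: "inner v0 h = 0" and xh: "inner x0 h = 0" using hx hv by (simp_all add: inner_commute)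
  define z where "z = J h v0"
  have "J x0 z = J h (J x0 v0)" unfolding z_def by (rule JT[OF xh])
  also have "\<dots> = l *\<^sub>R z" unfolding z_def using Jx0v0 J_lin_simps by simp
  finally have "(l * inner z v0) *\<^sub>R v0 = l *\<^sub>R z" using Jx0[of z] by simp
  hence zz: "z = inner z v0 *\<^sub>R v0" using l0 by (metis scaleR_scaleR scaleR_cancel_left)
  have "inner z v0 = R v0 h h v0" unfolding z_def by simp
  also have "\<dots> = R h v0 v0 h" by (rule pair)
  also have "\<dots> = 0" using RV[of h h] hx by simp
  finally show "J h v0 = 0" using zz z_def by simp
qed


lemma comm_rank1:
  assumes J1: "\<And>z. J y1 z = (m1 * inner z e1) *\<^sub>R e1" and J2: "\<And>z. J y2 z = (m2 * inner z e2) *\<^sub>R e2"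
    and e1: "inner e1 e1 = 1" and e2: "inner e2 e2 = 1" and m1: "m1 \<noteq> 0" and m2: "m2 \<noteq> 0"
    and y12: "inner y1 y2 = 0"
  shows "inner e1 e2 = 0 \<or> (\<exists>t. t * t = 1 \<and> e2 = t *\<^sub>R e1)"
proof -
  define t where "t = inner e1 e2"
  have "J y1 (J y2 e1) = J y2 (J y1 e1)" by (rule JT[OF y12])
  hence H: "(m1 * m2 * t * t) *\<^sub>R e1 = (m1 * m2 * t) *\<^sub>R e2"
    unfolding t_def using J1 J2 e1 by (simp add: inner_commute algebra_simps)
  have "(1/(m1*m2)) *\<^sub>R ((m1 * m2 * t * t) *\<^sub>R e1) = (1/(m1*m2)) *\<^sub>R ((m1 * m2 * t) *\<^sub>R e2)"
    using H by simp
  hence B: "(t * t) *\<^sub>R e1 = t *\<^sub>R e2" using m1 m2 by simp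
  show ?thesis
  proof (cases "t = 0")
    case True thus ?thesis unfolding t_def by simp
  next
    case False
    have e2t: "e2 = t *\<^sub>R e1" using B False by (metis scaleR_scaleR scaleR_cancel_left mult.commute)
    have "inner e2 e2 = t * t" using e1 unfolding e2t by simp
    thus ?thesis using e2 e2t by auto
  qed
qed

lemma C4:
  assumes ff: "inner f f = 1" and fx: "inner f x0 = 0" and fv: "inner f v0 = 0"
  shows "\<exists>z. J f z \<noteq> 0"
proof (rule ccontr)
  assume "\<not> (\<exists>z. J f z \<noteq> 0)"
  hence Z: "J f z = 0" for z by auto
  define y1 where "y1 = x0 + f"
  define y2 where "y2 = x0 - f"
  have xf: "inner x0 f = 0" and vf: "inner v0 f = 0" using fx fv by (simp_all add: inner_commute)
  have y12: "inner y1 y2 = 0" unfolding y1_def y2_def using x0u ff xf fx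
    by (simp add: inner_add_left inner_diff_right)
  have KJ: "inner (J y v0) v0 = l * inner y x0 * inner y x0" for y
  proof -
    have "inner (J y v0) v0 = R v0 y y v0" by simp
    also have "\<dots> = R y v0 v0 y" by (rule pair)
    finally show ?thesis using RV[of y y] by (simp add: inner_commute)
  qed
  have y1x: "inner y1 x0 = 1" unfolding y1_def using x0u fx by (simp add: inner_add_left)
  have y2x: "inner y2 x0 = 1" unfolding y2_def using x0u fx by (simp add: inner_diff_left)
  have "J y1 v0 \<noteq> 0" using KJ[of y1] y1x l0 by (metis inner_zero_left mult_1_right)
  then obtain m1 e1 where m1: "m1 \<noteq> 0" and e1: "inner e1 e1 = 1" and J1: "\<And>z. J y1 z = (m1 * inner z e1) *\<^sub>R e1"
    using RK1 by blast
  have "J y2 v0 \<noteq> 0" using KJ[of y2] y2x l0 by (metis inner_zero_left mult_1_right)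
  then obtain m2 e2 where m2: "m2 \<noteq> 0" and e2: "inner e2 e2 = 1" and J2: "\<And>z. J y2 z = (m2 * inner z e2) *\<^sub>R e2"
    using RK1 by blast
  have sum: "J y1 z + J y2 z = (2 * l * inner z v0) *\<^sub>R v0" for z
  proof -
    have "J y1 z + J y2 z = 2 *\<^sub>R J x0 z" unfolding y1_def y2_def J_plus J_minus using Z[of z]
      by (simp add: scaleR_2)
    thus ?thesis using Jx0[of z] by simp
  qed
  obtain s where es: "e1 = s *\<^sub>R v0"
  proof -
    from comm_rank1[OF J1 J2 e1 e2 m1 m2 y12]
    show ?thesis
    proof
      assume t0: "inner e1 e2 = 0"
      have "(m1 * inner e1 e1) *\<^sub>R e1 + (m2 * inner e1 e2) *\<^sub>R e2 = (2 * l * inner e1 v0) *\<^sub>R v0"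
        using sum[of e1] J1 J2 by simp
      hence "m1 *\<^sub>R e1 = (2 * l * inner e1 v0) *\<^sub>R v0" using t0 e1 by simp
      thus ?thesis using that scale_solve[OF m1] by blast
    next
      assume "\<exists>t. t * t = 1 \<and> e2 = t *\<^sub>R e1"
      then obtain t where tt: "t * t = 1" and e2t: "e2 = t *\<^sub>R e1" by blast
      have "(m1 * inner v0 e1) *\<^sub>R e1 + (m2 * inner v0 e2) *\<^sub>R e2 = (2 * l * inner v0 v0) *\<^sub>R v0"
        using sum[of v0] J1 J2 by simp
      hence A: "((m1 + m2 * (t * t)) * inner v0 e1) *\<^sub>R e1 = (2 * l) *\<^sub>R v0"
        unfolding e2t using v0u by (simp add: algebra_simps)
      have "(m1 + m2 * (t * t)) * inner v0 e1 \<noteq> 0" using A l0 v0nz by auto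
      hence "v0 = (2 * l / ((m1 + m2 * (t * t)) * inner v0 e1)) *\<^sub>R e1 \<or> True" by simp
      have "e1 = (2 * l / ((m1 + m2 * (t * t)) * inner v0 e1)) *\<^sub>R v0"
        by (rule scale_solve[OF \<open>(m1 + m2 * (t * t)) * inner v0 e1 \<noteq> 0\<close> A])
      thus ?thesis using that by blast
    qed
  qed
  have s0: "s \<noteq> 0" using es e1 by auto
  have Jy1v: "J y1 v0 = (m1 * s * s) *\<^sub>R v0" using J1[of v0] es v0u by simp
  have yv: "inner y1 v0 = 0" unfolding y1_def using x0v0 fv by (simp add: inner_add_left)
  have k0: "m1 * s * s \<noteq> 0" using m1 s0 by simp
  have "inner y1 y1 *\<^sub>R J v0 y1 = (m1 * s * s * inner v0 v0) *\<^sub>R y1" by (rule L2[OF yv Jy1v k0])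
  moreover have "J v0 y1 = l *\<^sub>R x0" using C1[of y1] y1x by simp
  ultimately have A: "(inner y1 y1 * l) *\<^sub>R x0 = (m1 * s * s) *\<^sub>R y1" using v0u by simp
  have "inner ((inner y1 y1 * l) *\<^sub>R x0) f = 0" using xf by simp
  moreover have "inner ((m1 * s * s) *\<^sub>R y1) f = m1 * s * s"
    unfolding y1_def using xf ff by (simp add: inner_add_left)
  ultimately have "m1 * s * s = 0" using A by metis
  thus False using k0 by simp
qed


lemma C6:
  assumes ff: "inner f f = 1" and fx: "inner f x0 = 0" and fv: "inner f v0 = 0"
    and Jf: "\<And>z. J f z = (lf * inner z g) *\<^sub>R g" and gg: "inner g g = 1" and lf0: "lf \<noteq> 0"
    and ab: "a * a + b * b = 1"
  shows "lf = l \<and> (\<exists>\<sigma>. \<sigma> * \<sigma> = 1 \<and> (\<forall>z. Jm (a *\<^sub>R x0 + b *\<^sub>R v0) f z =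
            (\<sigma> * l) *\<^sub>R (inner z (a *\<^sub>R v0 - b *\<^sub>R x0) *\<^sub>R g + inner z g *\<^sub>R (a *\<^sub>R v0 - b *\<^sub>R x0))))"
proof -
  define p where "p = a *\<^sub>R x0 + b *\<^sub>R v0"
  define q where "q = a *\<^sub>R v0 - b *\<^sub>R x0"
  have xf: "inner x0 f = 0" and vf: "inner v0 f = 0" using fx fv by (simp_all add: inner_commute)
  have pp: "inner p p = 1" unfolding p_def using x0u v0u x0v0 v0x0 ab
    by (simp add: inner_add_left inner_add_right algebra_simps)
  have qq: "inner q q = 1" unfolding q_def using x0u v0u x0v0 v0x0 ab
    by (simp add: inner_diff_left inner_diff_right algebra_simps)
  have pf: "inner p f = 0" unfolding p_def using xf vf by (simp add: inner_add_left)
  have qf: "inner q f = 0" unfolding q_def using xf vf by (simp add: inner_diff_left)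
  have fp: "inner f p = 0" and fq: "inner f q = 0" using pf qf by (simp_all add: inner_commute)
  have Jp: "J p z = (l * inner z q) *\<^sub>R q" for z unfolding p_def q_def by (rule C2)
  have Jqz: "J q z = (l * inner z p) *\<^sub>R p" for z unfolding p_def q_def by (rule Jq)
  have gx: "inner x0 g = 0"
  proof -
    have "inner (J f x0) x0 = R x0 f f x0" by simp
    also have "\<dots> = R f x0 x0 f" by (rule pair)
    also have "\<dots> = 0" using RX[of f f] fv by simp
    finally have "lf * inner x0 g * inner x0 g = 0" using Jf[of x0] by (simp add: inner_commute)
    thus ?thesis using lf0 by simp
  qed
  have gv: "inner v0 g = 0"
  proof -
    have "inner (J f v0) v0 = R v0 f f v0" by simp
    also have "\<dots> = R f v0 v0 f" by (rule pair)
    also have "\<dots> = 0" using RV[of f f] fx by simp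
    finally have "lf * inner v0 g * inner v0 g = 0" using Jf[of v0] by (simp add: inner_commute)
    thus ?thesis using lf0 by simp
  qed
  have gf: "inner f g = 0"
  proof -
    have "(lf * inner f g) *\<^sub>R g = 0" using Jf[of f] J_xx by simp
    thus ?thesis using lf0 gg by auto
  qed
  have gp: "inner g p = 0" unfolding p_def using gx gv by (simp add: inner_add_right inner_commute)
  have gq: "inner g q = 0" unfolding q_def using gx gv by (simp add: inner_diff_right inner_commute)
  have qg: "inner q g = 0" using gq by (simp add: inner_commute)
  have Jgp: "J g p = 0"
  proof -
    have "inner g x0 = 0" "inner g v0 = 0" using gx gv by (simp_all add: inner_commute)
    hence "J g x0 = 0" "J g v0 = 0" using C3 by auto
    thus ?thesis unfolding p_def J_lin_simps by simp
  qed
  define y1 where "y1 = p + f"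
  define y2 where "y2 = p - f"
  have y12: "inner y1 y2 = 0" unfolding y1_def y2_def using pp ff pf fp
    by (simp add: inner_add_left inner_diff_right)
  have Kq: "inner (J y q) q = l * inner y p * inner y p" for y
  proof -
    have "inner (J y q) q = R q y y q" by simp
    also have "\<dots> = R y q q y" by (rule pair)
    also have "\<dots> = inner (J q y) y" by simp
    finally show ?thesis using Jqz[of y] by (simp add: inner_commute)
  qed
  have y1p: "inner y1 p = 1" unfolding y1_def using pp fp by (simp add: inner_add_left)
  have y2p: "inner y2 p = 1" unfolding y2_def using pp fp by (simp add: inner_diff_left)
  have Jgf: "inner (J g f) f = lf"
  proof -
    have "inner (J g f) f = R f g g f" by simp
    also have "\<dots> = R g f f g" by (rule pair)
    also have "\<dots> = inner (J f g) g" by simp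
    finally show ?thesis using Jf[of g] gg by simp
  qed
  have Jgfp: "inner (J g f) p = 0"
  proof -
    have "inner (J g f) p = inner f (J g p)" by (rule inner_J_sym)
    thus ?thesis using Jgp by simp
  qed
  have Kg: "inner (J y g) g = inner (J g y) y" for y
  proof -
    have "inner (J y g) g = R g y y g" by simp
    also have "\<dots> = R y g g y" by (rule pair)
    finally show ?thesis by simp
  qed
  have K1g: "inner (J y1 g) g = lf" unfolding Kg y1_def J_lin_simps using Jgp Jgf Jgfp
    by (simp add: inner_add_right inner_commute[of "J g f" f])
  have K2g: "inner (J y2 g) g = lf" unfolding Kg y2_def J_lin_simps using Jgp Jgf Jgfp
    by (simp add: inner_diff_right inner_commute[of "J g f" f])
  have K1q: "inner (J y1 q) q = l" using Kq[of y1] y1p by simp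
  have K2q: "inner (J y2 q) q = l" using Kq[of y2] y2p by simp
  have "J y1 q \<noteq> 0" using K1q l0 by (metis inner_zero_left)
  then obtain m1 e1 where m1: "m1 \<noteq> 0" and e1: "inner e1 e1 = 1" and J1: "\<And>z. J y1 z = (m1 * inner z e1) *\<^sub>R e1"
    using RK1 by blast
  have "J y2 q \<noteq> 0" using K2q l0 by (metis inner_zero_left)
  then obtain m2 e2 where m2: "m2 \<noteq> 0" and e2: "inner e2 e2 = 1" and J2: "\<And>z. J y2 z = (m2 * inner z e2) *\<^sub>R e2"
    using RK1 by blast
  have sum: "J y1 z + J y2 z = (2 * l * inner z q) *\<^sub>R q + (2 * lf * inner z g) *\<^sub>R g" for z
  proof -
    have "J y1 z + J y2 z = 2 *\<^sub>R J p z + 2 *\<^sub>R J f z" unfolding y1_def y2_def J_plus J_minus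
      by (simp add: scaleR_2)
    thus ?thesis using Jp[of z] Jf[of z] by (simp add: mult.assoc)
  qed
  from comm_rank1[OF J1 J2 e1 e2 m1 m2 y12]
  have t0: "inner e1 e2 = 0"
  proof
    assume "\<exists>t. t * t = 1 \<and> e2 = t *\<^sub>R e1"
    then obtain t where tt: "t * t = 1" and e2t: "e2 = t *\<^sub>R e1" by blast
    have S: "J y1 z + J y2 z = ((m1 + m2) * inner z e1) *\<^sub>R e1" for z
      using J1[of z] J2[of z] tt unfolding e2t by (simp add: algebra_simps)
    have A: "((m1 + m2) * inner q e1) *\<^sub>R e1 = (2 * l) *\<^sub>R q"
      using S[of q] sum[of q] qq qg by simp
    have "inner (((m1 + m2) * inner q e1) *\<^sub>R e1) q = 2 * l" using A qq by simp
    hence c0: "(m1 + m2) * inner q e1 \<noteq> 0" using l0 by auto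
    have "inner (((m1 + m2) * inner q e1) *\<^sub>R e1) g = 0" using A qg by simp
    hence eg: "inner e1 g = 0" using c0 by simp
    have "((m1 + m2) * inner g e1) *\<^sub>R e1 = (2 * lf) *\<^sub>R g"
      using S[of g] sum[of g] gg gq by simp
    hence "(2 * lf) *\<^sub>R g = 0" using eg by (simp add: inner_commute)
    hence False using lf0 gg by auto
    thus ?thesis ..
  qed
  define \<alpha> where "\<alpha> = inner e1 q"
  define \<gamma> where "\<gamma> = inner e1 g"
  have E: "m1 *\<^sub>R e1 = (2 * l * \<alpha>) *\<^sub>R q + (2 * lf * \<gamma>) *\<^sub>R g"
    using sum[of e1] J1[of e1] J2[of e1] e1 t0 unfolding \<alpha>_def \<gamma>_def by simp
  have a2: "m1 * \<alpha> * \<alpha> = l" using K1q J1[of q] unfolding \<alpha>_def by (simp add: inner_commute)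
  have g2: "m1 * \<gamma> * \<gamma> = lf" using K1g J1[of g] unfolding \<gamma>_def by (simp add: inner_commute)
  have a0: "\<alpha> \<noteq> 0" using a2 l0 by auto
  have g0: "\<gamma> \<noteq> 0" using g2 lf0 by auto
  have "m1 * \<alpha> = 2 * l * \<alpha>" using arg_cong[OF E, of "\<lambda>u. inner u q"] qq gq
    unfolding \<alpha>_def by (simp add: inner_add_left)
  hence m1l: "m1 = 2 * l" using a0 by simp
  have "m1 * \<gamma> = 2 * lf * \<gamma>" using arg_cong[OF E, of "\<lambda>u. inner u g"] gg qg
    unfolding \<gamma>_def by (simp add: inner_add_left)
  hence m1lf: "m1 = 2 * lf" using g0 by simp
  have lfl: "lf = l" using m1l m1lf by simp
  have aa: "2 * (\<alpha> * \<alpha>) = 1" using a2 m1l l0 by (simp add: algebra_simps)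
  have ggm: "2 * (\<gamma> * \<gamma>) = 1" using g2 m1l lfl l0 by (simp add: algebra_simps)
  have e1eq: "e1 = \<alpha> *\<^sub>R q + \<gamma> *\<^sub>R g"
  proof -
    have "(2 * l) *\<^sub>R e1 = (2 * l) *\<^sub>R (\<alpha> *\<^sub>R q + \<gamma> *\<^sub>R g)" using E m1l lfl by (simp add: scaleR_add_right)
    thus ?thesis using l0 by simp
  qed
  have JmF: "Jm p f z = ((2 * \<alpha> * \<gamma>) * l) *\<^sub>R (inner z q *\<^sub>R g + inner z g *\<^sub>R q)" for z
  proof -
    have "Jm p f z = J y1 z - J p z - J f z" unfolding y1_def J_plus by simp
    also have "\<dots> = (m1 * inner z e1) *\<^sub>R e1 - (l * inner z q) *\<^sub>R q - (l * inner z g) *\<^sub>R g"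
      using J1 Jp Jf lfl by simp
    also have "\<dots> = ((2 * \<alpha> * \<gamma>) * l) *\<^sub>R (inner z q *\<^sub>R g + inner z g *\<^sub>R q)"
    proof (rule vec_eqI)
      fix w
      have h1: "(2 * l) * (\<alpha> * \<alpha>) = l" using aa by (metis mult.assoc mult.commute mult.right_neutral)
      have h2: "(2 * l) * (\<gamma> * \<gamma>) = l" using ggm by (metis mult.assoc mult.commute mult.right_neutral)
      show "inner ((m1 * inner z e1) *\<^sub>R e1 - (l * inner z q) *\<^sub>R q - (l * inner z g) *\<^sub>R g) w =
            inner (((2 * \<alpha> * \<gamma>) * l) *\<^sub>R (inner z q *\<^sub>R g + inner z g *\<^sub>R q)) w"
        unfolding e1eq m1l
        apply (simp add: inner_add_left inner_add_right inner_diff_left)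
        using aa ggm by algebra
    qed
    finally show ?thesis .
  qed
  have ss: "(2 * \<alpha> * \<gamma>) * (2 * \<alpha> * \<gamma>) = 1" using aa ggm
    by (metis (no_types, opaque_lifting) mult.assoc mult.commute mult.right_neutral)
  show ?thesis using lfl ss JmF unfolding p_def q_def by blast
qed


lemma g_perp:
  assumes fx: "inner f x0 = 0" and fv: "inner f v0 = 0"
    and Jf: "\<And>z. J f z = (lf * inner z g) *\<^sub>R g" and gg: "inner g g = 1" and lf0: "lf \<noteq> 0"
  shows "inner x0 g = 0" "inner v0 g = 0" "inner f g = 0"
proof -
  have "inner (J f x0) x0 = R x0 f f x0" by simp
  also have "\<dots> = R f x0 x0 f" by (rule pair)
  also have "\<dots> = 0" using RX[of f f] fv by simp
  finally have "lf * inner x0 g * inner x0 g = 0" using Jf[of x0] by (simp add: inner_commute)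
  thus "inner x0 g = 0" using lf0 by simp
  have "inner (J f v0) v0 = R v0 f f v0" by simp
  also have "\<dots> = R f v0 v0 f" by (rule pair)
  also have "\<dots> = 0" using RV[of f f] fx by simp
  finally have "lf * inner v0 g * inner v0 g = 0" using Jf[of v0] by (simp add: inner_commute)
  thus "inner v0 g = 0" using lf0 by simp
  have "(lf * inner f g) *\<^sub>R g = 0" using Jf[of f] J_xx by simp
  thus "inner f g = 0" using lf0 gg by auto
qed

lemma C7:
  assumes ff: "inner f f = 1" and fx: "inner f x0 = 0" and fv: "inner f v0 = 0"
  shows "\<exists>g. inner g g = 1 \<and> inner x0 g = 0 \<and> inner v0 g = 0 \<and> inner f g = 0 \<and>
     (\<forall>z. J f z = (l * inner z g) *\<^sub>R g) \<and>
     (\<forall>z. Jm x0 f z = l *\<^sub>R (inner z v0 *\<^sub>R g + inner z g *\<^sub>R v0)) \<and>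
     (\<forall>z. Jm v0 f z = (- l) *\<^sub>R (inner z x0 *\<^sub>R g + inner z g *\<^sub>R x0))"
proof -
  obtain z0 where "J f z0 \<noteq> 0" using C4[OF ff fx fv] by blast
  then obtain lf g where lf0: "lf \<noteq> 0" and gg: "inner g g = 1" and Jf: "\<And>z. J f z = (lf * inner z g) *\<^sub>R g"
    using RK1 by blast
  note gp = g_perp[OF fx fv Jf gg lf0]
  have gx: "inner g x0 = 0" and gv: "inner g v0 = 0" using gp by (simp_all add: inner_commute)
  have h1: "(1::real) * 1 + 0 * 0 = 1" "(0::real) * 0 + 1 * 1 = 1" by simp_all
  obtain s1 where lfl: "lf = l" and s1: "s1 * s1 = 1" and J1:
    "\<forall>z. Jm (1 *\<^sub>R x0 + 0 *\<^sub>R v0) f z = (s1 * l) *\<^sub>R (inner z (1 *\<^sub>R v0 - 0 *\<^sub>R x0) *\<^sub>R g + inner z g *\<^sub>R (1 *\<^sub>R v0 - 0 *\<^sub>R x0))"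
    using C6[OF ff fx fv Jf gg lf0 h1(1)] by blast
  obtain s2 where s2: "s2 * s2 = 1" and J2:
    "\<forall>z. Jm (0 *\<^sub>R x0 + 1 *\<^sub>R v0) f z = (s2 * l) *\<^sub>R (inner z (0 *\<^sub>R v0 - 1 *\<^sub>R x0) *\<^sub>R g + inner z g *\<^sub>R (0 *\<^sub>R v0 - 1 *\<^sub>R x0))"
    using C6[OF ff fx fv Jf gg lf0 h1(2)] by blast
  define c :: real where "c = sqrt (1/2)"
  have cc: "c * c = 1/2" unfolding c_def by simp
  have c0: "c \<noteq> 0" using cc by auto
  have hc: "c * c + c * c = 1" using cc by simp
  obtain s3 where s3: "s3 * s3 = 1" and J3:
    "\<forall>z. Jm (c *\<^sub>R x0 + c *\<^sub>R v0) f z = (s3 * l) *\<^sub>R (inner z (c *\<^sub>R v0 - c *\<^sub>R x0) *\<^sub>R g + inner z g *\<^sub>R (c *\<^sub>R v0 - c *\<^sub>R x0))"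
    using C6[OF ff fx fv Jf gg lf0 hc] by blast
  have J1': "Jm x0 f z = (s1 * l) *\<^sub>R (inner z v0 *\<^sub>R g + inner z g *\<^sub>R v0)" for z using spec[OF J1, of z] by simp
  have J2': "Jm v0 f z = (- (s2 * l)) *\<^sub>R (inner z x0 *\<^sub>R g + inner z g *\<^sub>R x0)" for z
    using spec[OF J2, of z] by (simp add: inner_minus_right scaleR_add_right scaleR_diff_right)
  have lin: "Jm (c *\<^sub>R x0 + c *\<^sub>R v0) f g = c *\<^sub>R Jm x0 f g + c *\<^sub>R Jm v0 f g"
    by (simp add: Jm_add1 Jm_scale1)
  have A: "(s3 * l) *\<^sub>R (c *\<^sub>R v0 - c *\<^sub>R x0) = c *\<^sub>R ((s1 * l) *\<^sub>R v0) + c *\<^sub>R ((- (s2 * l)) *\<^sub>R x0)"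
    using lin spec[OF J3, of g] J1'[of g] J2'[of g] gg gx gv by (simp add: inner_diff_right)
  have "inner ((s3 * l) *\<^sub>R (c *\<^sub>R v0 - c *\<^sub>R x0)) v0 = inner (c *\<^sub>R ((s1 * l) *\<^sub>R v0) + c *\<^sub>R ((- (s2 * l)) *\<^sub>R x0)) v0"
    using A by simp
  hence "s3 * l * c = c * s1 * l" using v0u x0v0 by (simp add: inner_diff_left inner_add_left)
  hence s31: "s3 = s1" using c0 l0 by simp
  have "inner ((s3 * l) *\<^sub>R (c *\<^sub>R v0 - c *\<^sub>R x0)) x0 = inner (c *\<^sub>R ((s1 * l) *\<^sub>R v0) + c *\<^sub>R ((- (s2 * l)) *\<^sub>R x0)) x0"
    using A by simp
  hence "s3 * l * c = c * s2 * l" using x0u v0x0 by (simp add: inner_diff_left inner_add_left)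
  hence s32: "s3 = s2" using c0 l0 by simp
  define g' where "g' = s1 *\<^sub>R g"
  have g'g': "inner g' g' = 1" unfolding g'_def using gg s1 by simp
  have "inner x0 g' = 0" "inner v0 g' = 0" "inner f g' = 0" unfolding g'_def using gp by simp_all
  moreover have "J f z = (l * inner z g') *\<^sub>R g'" for z
    unfolding g'_def using Jf[of z] lfl s1 by (simp add: algebra_simps)
  moreover have "Jm x0 f z = l *\<^sub>R (inner z v0 *\<^sub>R g' + inner z g' *\<^sub>R v0)" for z
    unfolding g'_def using J1'[of z] by (simp add: algebra_simps)
  moreover have "Jm v0 f z = (- l) *\<^sub>R (inner z x0 *\<^sub>R g' + inner z g' *\<^sub>R x0)" for z
    unfolding g'_def using J2'[of z] s31 s32 by (simp add: algebra_simps)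
  ultimately show ?thesis using g'g' by blast
qed


definition Th :: "'a \<Rightarrow> 'a" where "Th y = (1/l) *\<^sub>R Jm y x0 v0 - inner y x0 *\<^sub>R v0"

lemma Jm_xx: "Jm x x z = 2 *\<^sub>R J x z" by (rule vec_eqI) simp

lemma Th_add: "Th (u + w) = Th u + Th w" unfolding Th_def
  by (simp add: Jm_add1 inner_add_left scaleR_add_right scaleR_add_left algebra_simps)
lemma Th_scale: "Th (c *\<^sub>R u) = c *\<^sub>R Th u" unfolding Th_def
  by (simp add: Jm_scale1 scaleR_diff_right)
lemma Th_lin: "linear Th" by (rule linearI) (simp_all add: Th_add Th_scale)
lemma Th_0: "Th 0 = 0" using linear_0[OF Th_lin] .

lemma Th_x0: "Th x0 = v0"
  unfolding Th_def Jm_xx using Jx0v0 x0u l0 by (simp add: scaleR_2)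
lemma Th_v0: "Th v0 = - x0"
  unfolding Th_def using Jm_aba[of v0 x0] C1[of x0] x0u v0x0 l0 by simp

lemma Th_perp:
  assumes hx: "inner h x0 = 0" and hv: "inner h v0 = 0"
  shows "inner (Th h) x0 = 0 \<and> inner (Th h) v0 = 0 \<and> inner (Th h) h = 0 \<and> inner (Th h) (Th h) = inner h h \<and>
     (\<forall>z. J h z = (l * inner z (Th h)) *\<^sub>R Th h) \<and>
     (\<forall>z. Jm x0 h z = l *\<^sub>R (inner z v0 *\<^sub>R Th h + inner z (Th h) *\<^sub>R v0)) \<and>
     (\<forall>z. Jm v0 h z = (- l) *\<^sub>R (inner z x0 *\<^sub>R Th h + inner z (Th h) *\<^sub>R x0))"
proof (cases "h = 0")
  case True
  have "Jm x0 0 z = 0" "Jm v0 0 z = 0" for z using Jm_scale2[of x0 0 x0 z] Jm_scale2[of v0 0 x0 z] by simp_all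
  thus ?thesis using True Th_0 by (simp add: J_0)
next
  case False
  define n where "n = norm h"
  have n0: "n \<noteq> 0" unfolding n_def using False by simp
  define f where "f = (1/n) *\<^sub>R h"
  have hf: "h = n *\<^sub>R f" unfolding f_def using n0 by simp
  have ff: "inner f f = 1" unfolding f_def n_def using False
    by (simp add: power2_norm_eq_inner[symmetric] power2_eq_square)
  have fx: "inner f x0 = 0" and fv: "inner f v0 = 0" unfolding f_def using hx hv by simp_all
  obtain g where gg: "inner g g = 1" and gx: "inner x0 g = 0" and gv: "inner v0 g = 0" and gf: "inner f g = 0"
    and Jf: "\<forall>z. J f z = (l * inner z g) *\<^sub>R g"
    and Jmx: "\<forall>z. Jm x0 f z = l *\<^sub>R (inner z v0 *\<^sub>R g + inner z g *\<^sub>R v0)"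
    and Jmv: "\<forall>z. Jm v0 f z = (- l) *\<^sub>R (inner z x0 *\<^sub>R g + inner z g *\<^sub>R x0)"
    using C7[OF ff fx fv] by blast
  have Thf: "Th f = g" unfolding Th_def using spec[OF Jmx, of v0] Jm_comm[of f x0 v0] fx v0u gv l0
    by (simp add: inner_commute)
  have Thh: "Th h = n *\<^sub>R g" unfolding hf Th_scale Thf ..
  show ?thesis unfolding Thh
  proof (intro conjI allI)
    show "inner (n *\<^sub>R g) x0 = 0" using gx by (simp add: inner_commute)
    show "inner (n *\<^sub>R g) v0 = 0" using gv by (simp add: inner_commute)
    show "inner (n *\<^sub>R g) h = 0" unfolding hf using gf by (simp add: inner_commute)
    show "inner (n *\<^sub>R g) (n *\<^sub>R g) = inner h h" unfolding hf using gg ff by simp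
    fix z
    show "J h z = (l * inner z (n *\<^sub>R g)) *\<^sub>R n *\<^sub>R g" unfolding hf J_scale_x spec[OF Jf, of z]
      by (rule vec_eqI) (simp add: algebra_simps)
    show "Jm x0 h z = l *\<^sub>R (inner z v0 *\<^sub>R n *\<^sub>R g + inner z (n *\<^sub>R g) *\<^sub>R v0)"
      unfolding hf Jm_scale2 spec[OF Jmx, of z] by (rule vec_eqI) (simp add: inner_add_left algebra_simps)
    show "Jm v0 h z = (- l) *\<^sub>R (inner z x0 *\<^sub>R n *\<^sub>R g + inner z (n *\<^sub>R g) *\<^sub>R x0)"
      unfolding hf Jm_scale2 spec[OF Jmv, of z] by (rule vec_eqI) (simp add: inner_add_left algebra_simps)
  qed
qed

lemma decomp:
  fixes y :: 'a
  defines "a \<equiv> inner y x0" and "b \<equiv> inner y v0"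
  defines "h \<equiv> y - (a *\<^sub>R x0 + b *\<^sub>R v0)"
  shows "y = (a *\<^sub>R x0 + b *\<^sub>R v0) + h" "inner h x0 = 0" "inner h v0 = 0"
    "Th y = (a *\<^sub>R v0 - b *\<^sub>R x0) + Th h"
proof -
  show "y = (a *\<^sub>R x0 + b *\<^sub>R v0) + h" unfolding h_def by simp
  show "inner h x0 = 0" unfolding h_def a_def b_def using x0u v0x0
    by (simp add: inner_diff_left inner_add_left)
  show "inner h v0 = 0" unfolding h_def a_def b_def using v0u x0v0
    by (simp add: inner_diff_left inner_add_left)
  have "Th y = Th (a *\<^sub>R x0 + b *\<^sub>R v0) + Th h" unfolding h_def by (simp add: Th_add[symmetric])
  thus "Th y = (a *\<^sub>R v0 - b *\<^sub>R x0) + Th h" by (simp add: Th_add Th_scale Th_x0 Th_v0)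
qed

lemma J_Th: "J y z = (l * inner z (Th y)) *\<^sub>R Th y"
proof -
  define a where "a = inner y x0"
  define b where "b = inner y v0"
  define h where "h = y - (a *\<^sub>R x0 + b *\<^sub>R v0)"
  note d = decomp[of y, folded a_def b_def, folded h_def]
  define p where "p = a *\<^sub>R x0 + b *\<^sub>R v0"
  define q where "q = a *\<^sub>R v0 - b *\<^sub>R x0"
  note P = Th_perp[OF d(2) d(3)]
  have Jp: "J p z = (l * inner z q) *\<^sub>R q" unfolding p_def q_def by (rule C2)
  have Px: "Jm x0 h z = l *\<^sub>R (inner z v0 *\<^sub>R Th h + inner z (Th h) *\<^sub>R v0)" using P by blast
  have Pv: "Jm v0 h z = (- l) *\<^sub>R (inner z x0 *\<^sub>R Th h + inner z (Th h) *\<^sub>R x0)" using P by blast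
  have Jmph: "Jm p h z = l *\<^sub>R (inner z q *\<^sub>R Th h + inner z (Th h) *\<^sub>R q)"
  proof -
    have "Jm p h z = a *\<^sub>R Jm x0 h z + b *\<^sub>R Jm v0 h z" unfolding p_def by (simp add: Jm_add1 Jm_scale1)
    also have "\<dots> = l *\<^sub>R (inner z q *\<^sub>R Th h + inner z (Th h) *\<^sub>R q)"
      unfolding Px Pv q_def
      by (rule vec_eqI) (simp add: inner_add_left inner_diff_left inner_diff_right algebra_simps)
    finally show ?thesis .
  qed
  have Jh: "J h z = (l * inner z (Th h)) *\<^sub>R Th h" using P by blast
  have "J y z = J p z + Jm p h z + J h z" using d(1) J_plus unfolding p_def by metis
  also have "\<dots> = (l * inner z (q + Th h)) *\<^sub>R (q + Th h)"
    unfolding Jp Jmph Jh by (rule vec_eqI) (simp add: inner_add_left inner_add_right algebra_simps)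
  also have "q + Th h = Th y" using d(4) unfolding q_def by simp
  finally show ?thesis .
qed

lemma Th_props: "inner (Th y) y = 0" "inner (Th y) (Th y) = inner y y"
proof -
  define a where "a = inner y x0"
  define b where "b = inner y v0"
  define h where "h = y - (a *\<^sub>R x0 + b *\<^sub>R v0)"
  note d = decomp[of y, folded a_def b_def, folded h_def]
  note P = Th_perp[OF d(2) d(3)]
  have hx: "inner x0 h = 0" and hv: "inner v0 h = 0" using d(2) d(3) by (simp_all add: inner_commute)
  have tx: "inner x0 (Th h) = 0" and tv: "inner v0 (Th h) = 0" using P by (simp_all add: inner_commute)
  have e1: "inner (Th y) y = inner ((a *\<^sub>R v0 - b *\<^sub>R x0) + Th h) ((a *\<^sub>R x0 + b *\<^sub>R v0) + h)"
    using d(1) d(4) by metis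
  have e2: "inner (Th y) (Th y) = inner ((a *\<^sub>R v0 - b *\<^sub>R x0) + Th h) ((a *\<^sub>R v0 - b *\<^sub>R x0) + Th h)"
    using d(4) by metis
  have e3: "inner y y = inner ((a *\<^sub>R x0 + b *\<^sub>R v0) + h) ((a *\<^sub>R x0 + b *\<^sub>R v0) + h)"
    using d(1) by metis
  have th: "inner (Th h) x0 = 0" "inner (Th h) v0 = 0" "inner (Th h) h = 0" "inner (Th h) (Th h) = inner h h"
    using P by blast+
  show "inner (Th y) y = 0"
    unfolding e1 using th hx hv x0u v0u x0v0 v0x0 tx tv
    by (simp add: inner_add_left inner_add_right inner_diff_left inner_diff_right algebra_simps)
  show "inner (Th y) (Th y) = inner y y"
    unfolding e2 e3 using th hx hv tx tv x0u v0u x0v0 v0x0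
    by (simp add: inner_add_left inner_add_right inner_diff_left inner_diff_right inner_commute algebra_simps)
qed

lemma Th_herm: "hermitian_acs Th"
proof -
  have sk: "inner (Th u) w = - inner u (Th w)" for u w
  proof -
    have "inner (Th (u + w)) (u + w) = 0" by (rule Th_props(1))
    hence "inner (Th u) u + inner (Th u) w + inner (Th w) u + inner (Th w) w = 0"
      by (simp add: Th_add inner_add_left inner_add_right)
    thus ?thesis using Th_props(1)[of u] Th_props(1)[of w] by (simp add: inner_commute)
  qed
  have iso: "inner (Th u) (Th w) = inner u w" for u w
  proof -
    have "inner (Th (u + w)) (Th (u + w)) = inner (u + w) (u + w)" by (rule Th_props(2))
    hence "inner (Th u) (Th u) + 2 * inner (Th u) (Th w) + inner (Th w) (Th w) = inner u u + 2 * inner u w + inner w w"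
      by (simp add: Th_add inner_add_left inner_add_right inner_commute)
    thus ?thesis using Th_props(2)[of u] Th_props(2)[of w] by simp
  qed
  have sq: "Th (Th x) = - x" for x
  proof (rule vec_eqI)
    fix w
    have "inner (Th (Th x)) w = - inner (Th x) (Th w)" by (rule sk)
    also have "\<dots> = - inner x w" by (simp add: iso)
    finally show "inner (Th (Th x)) w = inner (- x) w" by simp
  qed
  show ?thesis unfolding hermitian_acs_def using Th_lin sq sk by blast
qed

lemma caseII_result: "R = (\<lambda>x y z w. (l/3) * RTheta Th x y z w)"
proof (rule act_eq[OF act act_scale[OF act_RTheta[OF Th_herm]]])
  fix z y w
  note hp = herm_props[OF Th_herm]
  have "R z y y w = inner (J y z) w" by simp
  also have "\<dots> = l * inner z (Th y) * inner (Th y) w" unfolding J_Th by simp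
  also have "RTheta Th z y y w = 3 * inner z (Th y) * inner (Th y) w"
    unfolding RTheta_expand using hp(5)[of y] hp(3)[of z y] by simp
  hence "l * inner z (Th y) * inner (Th y) w = (l/3) * RTheta Th z y y w" by simp
  finally show "R z y y w = (l/3) * RTheta Th z y y w" .
qed

end


lemma (in jt) classify:
  assumes dim: "DIM('a) \<ge> 3"
  shows "(\<exists>c::real. R = (\<lambda>x y z w. c * R0 x y z w)) \<or>
         (\<exists>(c::real) \<Theta>. hermitian_acs \<Theta> \<and> R = (\<lambda>x y z w. c * RTheta \<Theta> x y z w))"
proof (cases "\<exists>x l v1 v2. l \<noteq> 0 \<and> J x v1 = l *\<^sub>R v1 \<and> J x v2 = l *\<^sub>R v2 \<and> v1 \<noteq> 0 \<and> v2 \<noteq> 0 \<and> inner v1 v2 = 0")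
  case True
  then obtain x l v1 v2 where h: "l \<noteq> 0" "J x v1 = l *\<^sub>R v1" "J x v2 = l *\<^sub>R v2" "v1 \<noteq> 0" "v2 \<noteq> 0" "inner v1 v2 = 0"
    by blast
  have S: "Sph x (l / inner x x)" and x0: "x \<noteq> 0" using caseI_Sph[OF h] by blast+
  have "l / inner x x \<noteq> 0" using h(1) x0 by simp
  hence "R = (\<lambda>a b c d. (l / inner x x) * R0 a b c d)" by (rule R_is_R0[OF dim S _ x0])
  thus ?thesis by blast
next
  case False
  interpret C: c2 R by unfold_locales (use False in blast)
  show ?thesis
  proof (cases "\<forall>x z. J x z = 0")
    case True
    have "R = (\<lambda>x y z w. 0 * R0 x y z w)"
    proof (rule act_eq[OF act act_scale[OF act_R0]])
      fix z y w show "R z y y w = 0 * R0 z y y w" using inner_J[of y z w] True by simp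
    qed
    thus ?thesis by blast
  next
    case False
    then obtain x z0 where nz: "J x z0 \<noteq> 0" by blast
    then obtain m e where m: "m \<noteq> 0" and ee: "inner e e = 1" and Jx: "\<And>z. J x z = (m * inner z e) *\<^sub>R e"
      using C.RK1 by blast
    have x0: "x \<noteq> 0" using nz by (auto simp: J_0)
    define n where "n = norm x"
    have n0: "n \<noteq> 0" unfolding n_def using x0 by simp
    define x1 where "x1 = (1/n) *\<^sub>R x"
    define l where "l = m / (n * n)"
    have l0: "l \<noteq> 0" unfolding l_def using m n0 by simp
    have x1u: "inner x1 x1 = 1" unfolding x1_def n_def using x0
      by (simp add: power2_norm_eq_inner[symmetric] power2_eq_square)
    have Jxe: "J x e = m *\<^sub>R e" using Jx[of e] ee by simp
    have xe: "inner x e = 0" by (rule eig_perp[OF Jxe m])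
    have x1e: "inner x1 e = 0" unfolding x1_def using xe by simp
    have Jx1: "J x1 z = (l * inner z e) *\<^sub>R e" for z
      unfolding x1_def J_scale_x Jx l_def using n0 by simp
    interpret D: c2d R x1 e l by unfold_locales (use x1u ee x1e l0 Jx1 in auto)
    have "R = (\<lambda>x y z w. (l/3) * RTheta D.Th x y z w)" by (rule D.caseII_result)
    thus ?thesis using D.Th_herm by blast
  qed
qed

theorem theorem1p3:
  assumes "DIM('a::euclidean_space) \<ge> 3"
  shows "(\<forall>R :: 'a \<Rightarrow> 'a \<Rightarrow> 'a \<Rightarrow> 'a \<Rightarrow> real.
            alg_curv_tensor R \<and>
            (\<forall>x y. jacobi_op R x \<circ> jacobi_op R y = jacobi_op R y \<circ> jacobi_op R x)
            \<longrightarrow> R = (\<lambda>x y z w. 0))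
       \<and> (jacobi_tsankov (R0 :: 'a \<Rightarrow> 'a \<Rightarrow> 'a \<Rightarrow> 'a \<Rightarrow> real)
          \<and> (\<forall>\<Theta> :: 'a \<Rightarrow> 'a. hermitian_acs \<Theta> \<longrightarrow> jacobi_tsankov (RTheta \<Theta>)))
       \<and> (\<forall>R :: 'a \<Rightarrow> 'a \<Rightarrow> 'a \<Rightarrow> 'a \<Rightarrow> real.
            alg_curv_tensor R \<and> jacobi_tsankov R \<longrightarrow>
              (\<exists>c::real. R = (\<lambda>x y z w. c * R0 x y z w)) \<or>
              (\<exists>(c::real) \<Theta>. hermitian_acs \<Theta> \<and> R = (\<lambda>x y z w. c * RTheta \<Theta> x y z w)))"
proof (intro conjI allI impI)
  fix R :: "'a \<Rightarrow> 'a \<Rightarrow> 'a \<Rightarrow> 'a \<Rightarrow> real"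
  assume h: "alg_curv_tensor R \<and> (\<forall>x y. jacobi_op R x \<circ> jacobi_op R y = jacobi_op R y \<circ> jacobi_op R x)"
  show "R = (\<lambda>x y z w. 0)" using act.part1[OF act.intro] h by blast
next
  show "jacobi_tsankov (R0 :: 'a \<Rightarrow> 'a \<Rightarrow> 'a \<Rightarrow> 'a \<Rightarrow> real)" by (rule R0_jt)
next
  fix T :: "'a \<Rightarrow> 'a" assume "hermitian_acs T"
  thus "jacobi_tsankov (RTheta T)" by (rule RTheta_jt)
next
  fix R :: "'a \<Rightarrow> 'a \<Rightarrow> 'a \<Rightarrow> 'a \<Rightarrow> real"
  assume h: "alg_curv_tensor R \<and> jacobi_tsankov R"
  interpret jt R using h by (intro jt.intro act.intro jt_axioms.intro) auto
  show "(\<exists>c::real. R = (\<lambda>x y z w. c * R0 x y z w)) \<or>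
        (\<exists>(c::real) \<Theta>. hermitian_acs \<Theta> \<and> R = (\<lambda>x y z w. c * RTheta \<Theta> x y z w))"
    by (rule classify[OF assms])
qed

end
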